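(* Let $d\ge1$ and let $T>0$ (finite), $D\in\{1,\dots,d\}$ and $C>0$ be random variables. Set $\tilde T=T\wedge C$ and $\tilde D=D\,\mathbf 1\{T\le C\}$. Then for all $t\in\mathcal J$: $$P(\tilde T<t\mid T\ge t)=B(t)+\int_{(0,t)}\frac{\tilde S(s-)}{S(s)}(\tilde H-H)(ds)$$ and $$P(T\le t\mid C\ge t)=\sum_{j=1}^d\int_{(0,t]}\frac{1}{K(s-)}\tilde F_j(ds)+\int_{(0,t)}\frac{\check S(s)}{K(s)}(\check H_0-H_0)(ds).$$
   Context: Functions of the event time: - $S(t)=P(T>t)$. - $F_j(t)=P(T\le t,D=j)$. - $H_j(t)=\int_{(0,t]}S(s-)^{-1}F_j(ds)$, and $H=\sum_{j=1}^dH_j$. Censoring-time quantities: - $K(t)=P(C>t)$ and $G(t)=P(C\le t)$. - $H_0(t)=\int_{(0,t]}K(s-)^{-1}G(ds)$. Observed quantities: - $\tilde S(t)=P(\tilde T>t)$. - $\tilde F_j(t)=P(\tilde T\le t,\tilde D=j)$ for $j=0,\dots,d$. - $\tilde H_j(t)=\int_{(0,t]}\tilde S(s-)^{-1}\tilde F_j(ds)$, and $\tilde H=\sum_{j=1}^d\tilde H_j$. - $\check H_0(t)=\int_{(0,t]}(1-\Delta\tilde H(s))^{-1}\tilde H_0(ds)$. - $\check S(t)=\tilde S(t-)(1-\Delta\tilde H(t))$. - $B(t)=\int_{(0,t)}S(s)^{-1}\tilde F_0(ds)$. - Division by $0$ occurs only on null sets of the integrator. - $\mathcal J=\{t\ge0:\tilde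 S(t)>0\}$. *)

theory Defs
  imports "HOL-Probability.Probability"
begin

definition leftlim :: "(real \<Rightarrow> real) \<Rightarrow> real \<Rightarrow> real" where
  "leftlim f t = Lim (at_left t) f"

definition condprob :: "'a measure \<Rightarrow> ('a \<Rightarrow> bool) \<Rightarrow> ('a \<Rightarrow> bool) \<Rightarrow> real" where
  "condprob M A B = measure M {\<omega> \<in> space M. A \<omega> \<and> B \<omega>} / measure M {\<omega> \<in> space M. B \<omega>}"

definition survf :: "'a measure \<Rightarrow> ('a \<Rightarrow> real) \<Rightarrow> real \<Rightarrow> real" where
  "survf M X t = measure M {\<omega> \<in> space M. X \<omega> > t}"

text \<open>Lebesgue-Stieltjes measure of the sub-distribution function t \<mapsto> P(X \<le> t, P):
  the law of X restricted to the event P.\<close>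
definition subdistr :: "'a measure \<Rightarrow> ('a \<Rightarrow> real) \<Rightarrow> ('a \<Rightarrow> bool) \<Rightarrow> real measure" where
  "subdistr M X P = distr (density M (\<lambda>\<omega>. indicator {\<omega>. P \<omega>} \<omega>)) borel X"

definition obsT :: "('a \<Rightarrow> real) \<Rightarrow> ('a \<Rightarrow> real) \<Rightarrow> 'a \<Rightarrow> real" where
  "obsT T C \<omega> = min (T \<omega>) (C \<omega>)"

definition obsD :: "('a \<Rightarrow> real) \<Rightarrow> ('a \<Rightarrow> nat) \<Rightarrow> ('a \<Rightarrow> real) \<Rightarrow> 'a \<Rightarrow> nat" where
  "obsD T D C \<omega> = (if T \<omega> \<le> C \<omega> then D \<omega> else 0)"

definition Fmeas :: "'a measure \<Rightarrow> ('a \<Rightarrow> real) \<Rightarrow> ('a \<Rightarrow> nat) \<Rightarrow> nat \<Rightarrow> real measure" where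
  "Fmeas M T D j = subdistr M T (\<lambda>\<omega>. D \<omega> = j)"

definition Ftmeas :: "'a measure \<Rightarrow> ('a \<Rightarrow> real) \<Rightarrow> ('a \<Rightarrow> nat) \<Rightarrow> ('a \<Rightarrow> real) \<Rightarrow> nat \<Rightarrow> real measure" where
  "Ftmeas M T D C j = subdistr M (obsT T C) (\<lambda>\<omega>. obsD T D C \<omega> = j)"

definition Gmeas :: "'a measure \<Rightarrow> ('a \<Rightarrow> real) \<Rightarrow> real measure" where
  "Gmeas M C = distr M borel C"

definition Htil :: "'a measure \<Rightarrow> ('a \<Rightarrow> real) \<Rightarrow> ('a \<Rightarrow> nat) \<Rightarrow> ('a \<Rightarrow> real) \<Rightarrow> nat \<Rightarrow> real \<Rightarrow> real" where
  "Htil M T D C d t = (\<Sum>j\<in>{1..d}. LINT s:{0<..t}|Ftmeas M T D C j.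
       1 / leftlim (survf M (obsT T C)) s)"

definition dHtil :: "'a measure \<Rightarrow> ('a \<Rightarrow> real) \<Rightarrow> ('a \<Rightarrow> nat) \<Rightarrow> ('a \<Rightarrow> real) \<Rightarrow> nat \<Rightarrow> real \<Rightarrow> real" where
  "dHtil M T D C d t = Htil M T D C d t - leftlim (Htil M T D C d) t"

definition Scheck :: "'a measure \<Rightarrow> ('a \<Rightarrow> real) \<Rightarrow> ('a \<Rightarrow> nat) \<Rightarrow> ('a \<Rightarrow> real) \<Rightarrow> nat \<Rightarrow> real \<Rightarrow> real" where
  "Scheck M T D C d t = leftlim (survf M (obsT T C)) t * (1 - dHtil M T D C d t)"

end

theory Submission
  imports Defs
begin


lemma antimono_borel: fixes f :: "real \<Rightarrow> real"
  assumes "antimono f" shows "f \<in> borel_measurable borel"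
proof -
  have "mono (\<lambda>x. - f x)" using assms by (auto simp: mono_def antimono_def)
  then have "(\<lambda>x. - f x) \<in> borel_measurable borel" by (rule borel_measurable_mono)
  then have "(\<lambda>x. - (- f x)) \<in> borel_measurable borel" by measurable
  then show ?thesis by simp
qed

lemma PR:
  fixes \<alpha> \<beta> :: "real measure"
  assumes sa: "sigma_finite_measure \<alpha>" and sb: "sigma_finite_measure \<beta>"
    and sets_a: "sets \<alpha> = sets borel" and sets_b: "sets \<beta> = sets borel"
  shows "emeasure \<alpha> {0<..t} * emeasure \<beta> {0<..t} =
    (\<integral>\<^sup>+y. indicator {0<..t} y * emeasure \<alpha> {0<..<y} \<partial>\<beta>) +
    (\<integral>\<^sup>+x. indicator {0<..t} x * emeasure \<beta> {0<..x} \<partial>\<alpha>)"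
proof -
  interpret a: sigma_finite_measure \<alpha> by fact
  interpret b: sigma_finite_measure \<beta> by fact
  interpret pair_sigma_finite \<alpha> \<beta> by unfold_locales
  have sp: "sets (\<alpha> \<Otimes>\<^sub>M \<beta>) = sets (borel \<Otimes>\<^sub>M borel)"
    by (rule sets_pair_measure_cong) (auto simp: sets_a sets_b)
  define B1 where "B1 = {p \<in> {0<..t} \<times> {0<..t}. fst p < snd p}"
  define B2 where "B2 = {p \<in> {0<..t} \<times> {0<..t}. snd p \<le> fst p}"
  have mB1: "B1 \<in> sets (\<alpha> \<Otimes>\<^sub>M \<beta>)" unfolding sp B1_def by measurable
  have mB2: "B2 \<in> sets (\<alpha> \<Otimes>\<^sub>M \<beta>)" unfolding sp B2_def by measurable
  have "emeasure \<alpha> {0<..t} * emeasure \<beta> {0<..t} = emeasure (\<alpha> \<Otimes>\<^sub>M \<beta>) ({0<..t} \<times> {0<..t})"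
    by (rule b.emeasure_pair_measure_Times[symmetric]) (auto simp: sets_a sets_b)
  also have "{0<..t} \<times> {0<..t} = B1 \<union> B2" unfolding B1_def B2_def by auto
  also have "emeasure (\<alpha> \<Otimes>\<^sub>M \<beta>) (B1 \<union> B2) = emeasure (\<alpha> \<Otimes>\<^sub>M \<beta>) B1 + emeasure (\<alpha> \<Otimes>\<^sub>M \<beta>) B2"
    by (rule plus_emeasure[symmetric]) (use mB1 mB2 in \<open>auto simp: B1_def B2_def\<close>)
  also have "emeasure (\<alpha> \<Otimes>\<^sub>M \<beta>) B1 = (\<integral>\<^sup>+y. indicator {0<..t} y * emeasure \<alpha> {0<..<y} \<partial>\<beta>)"
    apply (subst emeasure_pair_measure_alt2[OF mB1])
    apply (rule nn_integral_cong)
    apply (auto simp: B1_def indicator_def)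
     apply (rule arg_cong[where f="emeasure \<alpha>"]; auto)
    done
  also have "emeasure (\<alpha> \<Otimes>\<^sub>M \<beta>) B2 = (\<integral>\<^sup>+x. indicator {0<..t} x * emeasure \<beta> {0<..x} \<partial>\<alpha>)"
    apply (subst b.emeasure_pair_measure_alt[OF mB2])
    apply (rule nn_integral_cong)
    apply (auto simp: B2_def indicator_def)
     apply (rule arg_cong[where f="emeasure \<beta>"]; auto)
    done
  finally show ?thesis .
qed


lemma ennreal_minus1_plus: "1 \<le> (r::real) \<Longrightarrow> ennreal (r - 1) + 1 = ennreal r"
  using ennreal_plus[of "r - 1" 1] by simp

lemma ennreal_mult_inv: "0 < (r::real) \<Longrightarrow> ennreal r * ennreal (1 / r) = 1"
  by (simp add: ennreal_mult[symmetric])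

lemma ennreal_mult_inv2: "0 < (a::real) \<Longrightarrow> 0 < b \<Longrightarrow> ennreal (1 / a) * ennreal (1 / b) = ennreal (1 / (a * b))"
  by (simp add: ennreal_mult[symmetric])

locale posdist = real_distribution \<mu> for \<mu> :: "real measure" +
  assumes nonpos0: "measure \<mu> {..0} = 0"
begin

definition S where "S x = measure \<mu> {x<..}"
definition Sm where "Sm x = measure \<mu> {x..}"

lemma S_cdf: "S x = 1 - cdf \<mu> x"
proof -
  have "{x<..} = space \<mu> - {..x}" by auto
  then show ?thesis unfolding S_def cdf_def using prob_compl[of "{..x}"] by simp
qed

lemma Sm_eq: "Sm x = 1 - measure \<mu> {..<x}"
proof -
  have "{x..} = space \<mu> - {..<x}" by auto
  then show ?thesis unfolding Sm_def using prob_compl[of "{..<x}"] by simp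
qed

lemma S_antimono: "antimono S"
  unfolding antimono_def S_cdf using cdf_nondecreasing by auto

lemma Sm_antimono: "antimono Sm"
  unfolding antimono_def Sm_def by (auto intro!: finite_measure_mono)

lemma S_le_Sm: "S x \<le> Sm x"
  unfolding S_def Sm_def by (auto intro!: finite_measure_mono)

lemma Sm_le_S: "x < y \<Longrightarrow> Sm y \<le> S x"
  unfolding S_def Sm_def by (auto intro!: finite_measure_mono)

lemma S_nonneg: "0 \<le> S x" unfolding S_def by simp
lemma Sm_nonneg: "0 \<le> Sm x" unfolding Sm_def by simp
lemma S_le1: "S x \<le> 1" unfolding S_def by simp
lemma Sm_le1: "Sm x \<le> 1" unfolding Sm_def by simp

lemma S_rcont: "continuous (at_right a) S"
proof -
  have "continuous (at_right a) (\<lambda>x. 1 - cdf \<mu> x)"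
    by (intro continuous_intros cdf_is_right_cont)
  then show ?thesis unfolding S_cdf[abs_def] .
qed

lemma S_at_left: "(S \<longlongrightarrow> Sm a) (at_left a)"
proof -
  have "((\<lambda>x. 1 - cdf \<mu> x) \<longlongrightarrow> 1 - measure \<mu> {..<a}) (at_left a)"
    by (intro tendsto_intros cdf_at_left)
  then show ?thesis unfolding S_cdf[abs_def] Sm_eq .
qed

lemma S_meas[measurable]: "S \<in> borel_measurable borel"
  by (rule antimono_borel[OF S_antimono])
lemma Sm_meas[measurable]: "Sm \<in> borel_measurable borel"
  by (rule antimono_borel[OF Sm_antimono])

lemma S_nonpos: "x \<le> 0 \<Longrightarrow> S x = 1"
proof -
  assume "x \<le> 0"
  then have "cdf \<mu> x \<le> cdf \<mu> 0" by (rule cdf_nondecreasing)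
  moreover have "cdf \<mu> 0 = 0" using nonpos0 by (simp add: cdf_def)
  ultimately have "cdf \<mu> x = 0" using cdf_nonneg[of x] by linarith
  then show ?thesis by (simp add: S_cdf)
qed

lemma emeasure_Ioc0: "0 \<le> t \<Longrightarrow> emeasure \<mu> {0<..t} = ennreal (1 - S t)"
  using emeasure_Ioc[of 0 t] nonpos0 by (simp add: S_cdf cdf_def)

lemma measure_Ioo0: assumes "0 < s" shows "measure \<mu> {0<..<s} = 1 - Sm s"
proof -
  have "{0<..<s} = {..<s} - {..0}" by auto
  moreover have "{..0} \<subseteq> {..<s}" using assms by auto
  ultimately have "measure \<mu> {0<..<s} = measure \<mu> {..<s} - measure \<mu> {..0}"
    by (simp add: finite_measure_Diff)
  then show ?thesis using nonpos0 by (simp add: Sm_eq)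
qed


lemma Phi_facts:
  assumes v: "0 \<le> v" "S v > 0"
    and \<Phi>_def: "\<Phi> = (\<lambda>x. 1 / S (min x v))"
  shows "\<And>x. S (min x v) \<ge> S v" "\<And>x y. x \<le> y \<Longrightarrow> \<Phi> x \<le> \<Phi> y"
    "\<And>a. continuous (at_right a) \<Phi>" "\<And>x. \<Phi> x \<ge> 1" "\<Phi> 0 = 1"
proof -
  show Sge: "S (min x v) \<ge> S v" for x
    using S_antimono by (auto simp: antimono_def)
  show "\<Phi> x \<le> \<Phi> y" if "x \<le> y" for x y
  proof -
    have "S (min y v) \<le> S (min x v)" using S_antimono that by (auto simp: antimono_def)
    moreover have "S (min y v) > 0" using Sge[of y] v by linarith
    ultimately show ?thesis unfolding \<Phi>_def by (simp add: frac_le)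
  qed
  show "\<Phi> x \<ge> 1" for x
  proof -
    have "S (min x v) > 0" using Sge[of x] v by linarith
    moreover have "S (min x v) \<le> 1" by (rule S_le1)
    ultimately show ?thesis unfolding \<Phi>_def by simp
  qed
  show "\<Phi> 0 = 1" unfolding \<Phi>_def using v by (simp add: S_nonpos)
  show "continuous (at_right a) \<Phi>" for a
  proof (cases "a < v")
    case True
    have Sa: "S a \<noteq> 0" using Sge[of a] v True by (simp add: min_def)
    have c1: "continuous (at_right a) (\<lambda>x. 1 / S x)"
      by (intro continuous_intros S_rcont Sa)
    have ev: "eventually (\<lambda>x. 1 / S x = \<Phi> x) (at_right a)"
      unfolding eventually_at_right[OF True] \<Phi>_def using True by (auto intro!: exI[of _ v])
    have "\<Phi> a = 1 / S a" using True by (simp add: \<Phi>_def)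
    with c1 ev show ?thesis unfolding continuous_within
      by (auto elim: tendsto_cong[THEN iffD1, rotated])
  next
    case False
    have ev: "eventually (\<lambda>x. \<Phi> a = \<Phi> x) (at_right a)"
      using eventually_at_right_less[of a]
      by (rule eventually_mono) (use False in \<open>auto simp: \<Phi>_def min_def\<close>)
    show ?thesis unfolding continuous_within
      by (rule tendsto_cong[THEN iffD1, OF ev]) simp
  qed
qed

lemma emeasure_Ioo0: "0 < s \<Longrightarrow> emeasure \<mu> {0<..<s} = ennreal (1 - Sm s)"
  using measure_Ioo0 by (simp add: emeasure_eq_measure)


lemma L1:
  assumes v: "0 \<le> v" "S v > 0"
  shows "(\<integral>\<^sup>+x. ennreal (indicator {0<..v} x / (S x * Sm x)) \<partial>\<mu>) = ennreal (1 / S v - 1)"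
proof -
  define \<Phi> where "\<Phi> = (\<lambda>x. 1 / S (min x v))"
  note PF = Phi_facts[OF v \<Phi>_def]
  define \<nu> where "\<nu> = interval_measure \<Phi>"
  have sf\<nu>: "sigma_finite_measure \<nu>" unfolding \<nu>_def
    by (rule sigma_finite_interval_measure) (use PF in auto)
  have sets\<nu>[measurable_cong]: "sets \<nu> = sets borel" unfolding \<nu>_def by simp
  have sf\<mu>: "sigma_finite_measure \<mu>" by unfold_locales
  have em\<nu>: "emeasure \<nu> {0<..x} = ennreal (\<Phi> x - 1)" if "0 \<le> x" for x
    unfolding \<nu>_def using that PF by (subst emeasure_interval_measure_Ioc) auto
  have \<Phi>_le: "\<Phi> x = 1 / S x" if "x \<le> v" for x using that by (simp add: \<Phi>_def)
  have S_pos: "S y > 0" if "y \<le> v" for y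
    using S_antimono that v by (auto simp: antimono_def intro: less_le_trans)
  have Sm_pos: "Sm y > 0" if "y \<le> v" for y using S_pos[OF that] S_le_Sm[of y] by linarith
  have \<Phi>_meas[measurable]: "\<Phi> \<in> borel_measurable borel"
    by (rule borel_measurable_mono) (use PF in \<open>auto simp: mono_def\<close>)
  define c where "c t = (\<integral>\<^sup>+y. ennreal (indicator {0<..t} y * Sm y) \<partial>\<nu>)" for t
  define e where "e t = (\<integral>\<^sup>+x. ennreal (indicator {0<..t} x * \<Phi> x) \<partial>\<mu>)" for t
  have ce: "c t = e t" if tv: "t \<le> v" for t
  proof (cases "0 \<le> t")
    case False
    then have "{0<..t} = {}" by auto
    then show ?thesis unfolding c_def e_def by simp
  next
    case True
    have pr: "emeasure \<mu> {0<..t} * emeasure \<nu> {0<..t} =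
      (\<integral>\<^sup>+y. indicator {0<..t} y * emeasure \<mu> {0<..<y} \<partial>\<nu>) +
      (\<integral>\<^sup>+x. indicator {0<..t} x * emeasure \<nu> {0<..x} \<partial>\<mu>)"
      by (rule PR[OF sf\<mu> sf\<nu>]) (auto simp: sets\<nu>)
    define a where "a = (\<integral>\<^sup>+y. ennreal (indicator {0<..t} y * (1 - Sm y)) \<partial>\<nu>)"
    define b where "b = (\<integral>\<^sup>+x. ennreal (indicator {0<..t} x * (\<Phi> x - 1)) \<partial>\<mu>)"
    have 1: "(\<integral>\<^sup>+y. indicator {0<..t} y * emeasure \<mu> {0<..<y} \<partial>\<nu>) = a"
      unfolding a_def by (rule nn_integral_cong) (auto simp: indicator_def emeasure_Ioo0)
    have 2: "(\<integral>\<^sup>+x. indicator {0<..t} x * emeasure \<nu> {0<..x} \<partial>\<mu>) = b"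
      unfolding b_def by (rule nn_integral_cong) (auto simp: indicator_def em\<nu>)
    have pr': "ennreal (1 - S t) * ennreal (\<Phi> t - 1) = a + b"
      using pr 1 2 by (simp add: emeasure_Ioc0[OF True] em\<nu>[OF True])
    have ac: "a + c t = ennreal (\<Phi> t - 1)"
    proof -
      have "a + c t = (\<integral>\<^sup>+y. ennreal (indicator {0<..t} y * (1 - Sm y)) + ennreal (indicator {0<..t} y * Sm y) \<partial>\<nu>)"
        unfolding a_def c_def by (rule nn_integral_add[symmetric]) auto
      also have "\<dots> = (\<integral>\<^sup>+y. indicator {0<..t} y \<partial>\<nu>)"
        by (rule nn_integral_cong) (auto simp: indicator_def ennreal_plus[symmetric] Sm_le1 Sm_nonneg simp del: ennreal_plus)
      also have "\<dots> = ennreal (\<Phi> t - 1)" using em\<nu>[OF True] by simp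
      finally show ?thesis .
    qed
    have be: "b + ennreal (1 - S t) = e t"
    proof -
      have "b + ennreal (1 - S t) = b + (\<integral>\<^sup>+x. indicator {0<..t} x \<partial>\<mu>)"
        using emeasure_Ioc0[OF True] by simp
      also have "\<dots> = (\<integral>\<^sup>+x. ennreal (indicator {0<..t} x * (\<Phi> x - 1)) + indicator {0<..t} x \<partial>\<mu>)"
        unfolding b_def by (rule nn_integral_add[symmetric]) auto
      also have "\<dots> = e t" unfolding e_def
        by (rule nn_integral_cong) (use PF in \<open>auto simp: indicator_def ennreal_minus1_plus\<close>)
      finally show ?thesis .
    qed
    have afin: "a \<noteq> \<infinity>" using ac by (metis ennreal_add_eq_top ennreal_neq_top infinity_ennreal_def)
    have cfin: "c t \<noteq> \<infinity>" using ac by (metis ennreal_add_eq_top ennreal_neq_top infinity_ennreal_def)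
    have "ennreal (1 - S t) * ennreal (\<Phi> t - 1) \<noteq> \<infinity>" by (simp add: ennreal_mult_eq_top_iff)
    then have bfin: "b \<noteq> \<infinity>" using pr' by (metis ennreal_add_eq_top infinity_ennreal_def)
    obtain ar where ar: "a = ennreal ar" "0 \<le> ar" using afin by (cases a) auto
    obtain br where br: "b = ennreal br" "0 \<le> br" using bfin by (cases b) auto
    obtain cr where cr: "c t = ennreal cr" "0 \<le> cr" using cfin by (cases "c t") auto
    have St: "S t > 0" using S_pos tv by auto
    have St1: "S t \<le> 1" by (rule S_le1)
    have Pt: "\<Phi> t = 1 / S t" using \<Phi>_le tv by auto
    have Pt1: "\<Phi> t \<ge> 1" using PF by auto
    have e1: "ar + cr = \<Phi> t - 1" using ac ar cr Pt1 by (simp add: ennreal_plus[symmetric] del: ennreal_plus)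
    have e2: "(1 - S t) * (\<Phi> t - 1) = ar + br" using pr' ar br Pt1 St1
      by (simp add: ennreal_plus[symmetric] ennreal_mult[symmetric] del: ennreal_plus)
    have e3: "e t = ennreal (br + (1 - S t))" using be br St1 by (simp add: ennreal_plus[symmetric] del: ennreal_plus)
    have "cr = br + (1 - S t)"
    proof -
      have "S t * \<Phi> t = 1" using Pt St by simp
      then show ?thesis using e1 e2 by (simp add: algebra_simps)
    qed
    then show ?thesis using cr e3 by simp
  qed
  define A where "A = density \<nu> (\<lambda>y. ennreal (indicator {0<..v} y * Sm y))"
  define B where "B = density \<mu> (\<lambda>x. ennreal (indicator {0<..v} x * \<Phi> x))"
  have setsA: "sets A = sets borel" unfolding A_def by (simp add: sets\<nu>)
  have setsB: "sets B = sets borel" unfolding B_def by simp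
  have Ax: "emeasure A {..x} = c (min x v)" for x
    unfolding A_def c_def
    by (subst emeasure_density) (auto intro!: nn_integral_cong simp: indicator_def)
  have Bx: "emeasure B {..x} = e (min x v)" for x
    unfolding B_def e_def
    by (subst emeasure_density) (auto intro!: nn_integral_cong simp: indicator_def)
  have cfin: "c v \<noteq> \<infinity>"
  proof -
    have "c v \<le> (\<integral>\<^sup>+y. indicator {0<..v} y \<partial>\<nu>)" unfolding c_def
      by (rule nn_integral_mono) (auto simp: indicator_def Sm_le1)
    also have "\<dots> = ennreal (\<Phi> v - 1)" using em\<nu>[OF v(1)] by simp
    finally show ?thesis by (auto simp: top_unique)
  qed
  have Auniv: "emeasure A (space A) = c v"
    unfolding A_def c_def by (subst emeasure_density) auto
  have Buniv: "emeasure B (space B) = e v"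
    unfolding B_def e_def by (subst emeasure_density) auto
  have fA: "finite_borel_measure A"
    by (rule finite_borel_measure.intro, rule finite_measureI)
       (use Auniv cfin setsA in \<open>auto simp: finite_borel_measure_axioms_def\<close>)
  have fB: "finite_borel_measure B"
    by (rule finite_borel_measure.intro, rule finite_measureI)
       (use Buniv cfin ce[of v] setsB in \<open>auto simp: finite_borel_measure_axioms_def\<close>)
  have "cdf A = cdf B"
  proof
    fix x
    show "cdf A x = cdf B x" unfolding cdf_def2 measure_def using Ax Bx ce[of "min x v"] by simp
  qed
  then have AB: "A = B" by (rule cdf_unique'[OF fA fB])
  define g where "g y = ennreal (indicator {0<..v} y / Sm y)" for y
  have [measurable]: "g \<in> borel_measurable borel" unfolding g_def by measurable
  have "(\<integral>\<^sup>+y. g y \<partial>A) = (\<integral>\<^sup>+y. indicator {0<..v} y \<partial>\<nu>)"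
    unfolding A_def
    apply (subst nn_integral_density)
      apply (auto simp: g_def)[2]
    apply (rule nn_integral_cong)
    using Sm_pos by (auto simp: g_def indicator_def ennreal_mult_inv)
  also have "\<dots> = ennreal (1 / S v - 1)" using em\<nu>[OF v(1)] \<Phi>_le[of v] by simp
  finally have 1: "(\<integral>\<^sup>+y. g y \<partial>A) = ennreal (1 / S v - 1)" .
  have "(\<integral>\<^sup>+y. g y \<partial>B) = (\<integral>\<^sup>+x. ennreal (indicator {0<..v} x / (S x * Sm x)) \<partial>\<mu>)"
    unfolding B_def
    apply (subst nn_integral_density)
      apply (auto simp: g_def)[2]
    apply (rule nn_integral_cong)
    using Sm_pos S_pos \<Phi>_le PF
    by (auto simp: g_def indicator_def ennreal_mult_inv2)
  with 1 AB show ?thesis by simp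
qed


lemma L1r:
  assumes v: "0 \<le> v" "S v > 0"
  shows "integrable \<mu> (\<lambda>x. indicator {0<..v} x / (S x * Sm x))"
    "(\<integral>x. indicator {0<..v} x / (S x * Sm x) \<partial>\<mu>) = 1 / S v - 1"
proof -
  have nn: "0 \<le> indicator {0<..v} x / (S x * Sm x)" for x
    by (auto simp: indicator_def S_nonneg Sm_nonneg)
  have pos: "0 \<le> 1 / S v - 1" using v S_le1[of v] by simp
  show "integrable \<mu> (\<lambda>x. indicator {0<..v} x / (S x * Sm x))"
    by (rule integrableI_nn_integral_finite[OF _ _ L1[OF v]]) (auto simp: nn)
  show "(\<integral>x. indicator {0<..v} x / (S x * Sm x) \<partial>\<mu>) = 1 / S v - 1"
    apply (subst integral_eq_nn_integral)
    apply (auto simp: nn)[2]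
    by (simp add: L1[OF v] enn2real_ennreal[OF pos])
qed

lemma Sm_nonpos: "x \<le> 0 \<Longrightarrow> Sm x = 1"
proof -
  assume "x \<le> 0"
  then have "measure \<mu> {..<x} \<le> measure \<mu> {..0}" by (auto intro!: finite_measure_mono)
  then have "measure \<mu> {..<x} = 0" using nonpos0 measure_nonneg[of \<mu> "{..<x}"] by linarith
  then show ?thesis by (simp add: Sm_eq)
qed

lemma atom_eq: "measure \<mu> {v} = Sm v - S v"
proof -
  have "{v..} = {v} \<union> {v<..}" by auto
  then have "Sm v = measure \<mu> {v} + S v" unfolding Sm_def S_def
    using finite_measure_Union[of "{v}" "{v<..}"] by simp
  then show ?thesis by simp
qed

lemma L2r:
  assumes v: "0 \<le> v" "S v > 0"
  shows "integrable \<mu> (\<lambda>x. indicator {0<..<v} x / (S x * Sm x))"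
    "(\<integral>x. indicator {0<..<v} x / (S x * Sm x) \<partial>\<mu>) = 1 / Sm v - 1"
proof -
  have nn: "0 \<le> 1 / (S x * Sm x)" for x
    by (auto simp: S_nonneg Sm_nonneg)
  show int2: "integrable \<mu> (\<lambda>x. indicator {0<..<v} x / (S x * Sm x))"
    by (rule Bochner_Integration.integrable_bound[OF L1r(1)[OF v]]) (auto simp: indicator_def nn)
  show "(\<integral>x. indicator {0<..<v} x / (S x * Sm x) \<partial>\<mu>) = 1 / Sm v - 1"
  proof (cases "v = 0")
    case True
    then show ?thesis by (simp add: Sm_nonpos)
  next
    case False
    then have vp: "0 < v" using v by simp
    have split: "indicator {0<..v} x / (S x * Sm x) = indicator {0<..<v} x / (S x * Sm x) + indicator {v} x * (1 / (S v * Sm v))" for x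
      using vp by (auto simp: indicator_def)
    have int3: "integrable \<mu> (\<lambda>x. indicator {v} x * (1 / (S v * Sm v)))"
      by (intro integrable_mult_left integrable_real_indicator) (auto simp: emeasure_eq_measure)
    have "1 / S v - 1 = (\<integral>x. indicator {0<..<v} x / (S x * Sm x) + indicator {v} x * (1 / (S v * Sm v)) \<partial>\<mu>)"
      using L1r(2)[OF v] split by simp
    also have "\<dots> = (\<integral>x. indicator {0<..<v} x / (S x * Sm x) \<partial>\<mu>) + measure \<mu> {v} * (1 / (S v * Sm v))"
      by (subst Bochner_Integration.integral_add[OF int2 int3]) simp
    finally have eq: "1 / S v - 1 = (\<integral>x. indicator {0<..<v} x / (S x * Sm x) \<partial>\<mu>) + (Sm v - S v) * (1 / (S v * Sm v))"
      by (simp add: atom_eq)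
    have Smp: "Sm v > 0" using v S_le_Sm[of v] by linarith
    have "(Sm v - S v) * (1 / (S v * Sm v)) = 1 / S v - 1 / Sm v"
      using Smp v by (simp add: field_simps)
    with eq show ?thesis by simp
  qed
qed

end


definition survm :: "'a measure \<Rightarrow> ('a \<Rightarrow> real) \<Rightarrow> real \<Rightarrow> real" where
  "survm M X x = measure M {\<omega> \<in> space M. X \<omega> \<ge> x}"

lemma posdist_distr:
  assumes P: "prob_space M" and X: "X \<in> borel_measurable M" and pos: "\<forall>\<omega>\<in>space M. X \<omega> > 0"
  shows "posdist (distr M borel X)"
    "posdist.S (distr M borel X) = survf M X"
    "posdist.Sm (distr M borel X) = survm M X"
proof -
  have rd: "real_distribution (distr M borel X)" using X by (simp add: prob_space.real_distribution_distr[OF P])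
  have "measure (distr M borel X) {..0} = measure M (X -` {..0} \<inter> space M)"
    using X by (simp add: measure_distr)
  also have "X -` {..0} \<inter> space M = {}" using pos by force
  finally show pd: "posdist (distr M borel X)"
    by (intro posdist.intro[OF rd] posdist_axioms.intro) simp
  show "posdist.S (distr M borel X) = survf M X"
  proof
    fix x
    have "X -` {x<..} \<inter> space M = {\<omega> \<in> space M. X \<omega> > x}" by auto
    then show "posdist.S (distr M borel X) x = survf M X x"
      using X by (simp add: posdist.S_def[OF pd] survf_def measure_distr)
  qed
  show "posdist.Sm (distr M borel X) = survm M X"
  proof
    fix x
    have "X -` {x..} \<inter> space M = {\<omega> \<in> space M. X \<omega> \<ge> x}" by auto
    then show "posdist.Sm (distr M borel X) x = survm M X x"
      using X by (simp add: posdist.Sm_def[OF pd] survm_def measure_distr)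
  qed
qed

lemma LX:
  assumes P: "prob_space M" and X[measurable]: "X \<in> borel_measurable M"
    and pos: "\<forall>\<omega>\<in>space M. X \<omega> > 0" and v: "0 \<le> v" "survf M X v > 0"
  shows "integrable M (\<lambda>\<omega>. if X \<omega> \<le> v then 1 / (survf M X (X \<omega>) * survm M X (X \<omega>)) else 0)"
    "(\<integral>\<omega>. (if X \<omega> \<le> v then 1 / (survf M X (X \<omega>) * survm M X (X \<omega>)) else 0) \<partial>M) = 1 / survf M X v - 1"
    "integrable M (\<lambda>\<omega>. if X \<omega> < v then 1 / (survf M X (X \<omega>) * survm M X (X \<omega>)) else 0)"
    "(\<integral>\<omega>. (if X \<omega> < v then 1 / (survf M X (X \<omega>) * survm M X (X \<omega>)) else 0) \<partial>M) = 1 / survm M X v - 1"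
proof -
  note pd = posdist_distr[OF P X pos]
  interpret posdist "distr M borel X" by (rule pd(1))
  note SS = pd(2,3)
  have [measurable]: "S \<in> borel_measurable borel" "Sm \<in> borel_measurable borel" by measurable
  have c1: "\<And>\<omega>. \<omega> \<in> space M \<Longrightarrow> (if X \<omega> \<le> v then 1 / (survf M X (X \<omega>) * survm M X (X \<omega>)) else 0)
      = indicator {0<..v} (X \<omega>) / (S (X \<omega>) * Sm (X \<omega>))"
    using pos by (auto simp: SS indicator_def)
  have c2: "\<And>\<omega>. \<omega> \<in> space M \<Longrightarrow> (if X \<omega> < v then 1 / (survf M X (X \<omega>) * survm M X (X \<omega>)) else 0)
      = indicator {0<..<v} (X \<omega>) / (S (X \<omega>) * Sm (X \<omega>))"
    using pos by (auto simp: SS indicator_def)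
  have v': "S v > 0" using v by (simp add: SS)
  have m1: "(\<lambda>x. indicator {0<..v} x / (S x * Sm x)) \<in> borel_measurable borel" by measurable
  have m2: "(\<lambda>x. indicator {0<..<v} x / (S x * Sm x)) \<in> borel_measurable borel" by measurable
  have i1: "integrable M (\<lambda>\<omega>. indicator {0<..v} (X \<omega>) / (S (X \<omega>) * Sm (X \<omega>)))"
    using L1r(1)[OF v(1) v'] by (subst (asm) integrable_distr_eq[OF X m1])
  show "integrable M (\<lambda>\<omega>. if X \<omega> \<le> v then 1 / (survf M X (X \<omega>) * survm M X (X \<omega>)) else 0)"
    by (rule Bochner_Integration.integrable_cong[THEN iffD1, OF refl _ i1]) (simp add: c1)
  have i2: "integrable M (\<lambda>\<omega>. indicator {0<..<v} (X \<omega>) / (S (X \<omega>) * Sm (X \<omega>)))"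
    using L2r(1)[OF v(1) v'] by (subst (asm) integrable_distr_eq[OF X m2])
  show "integrable M (\<lambda>\<omega>. if X \<omega> < v then 1 / (survf M X (X \<omega>) * survm M X (X \<omega>)) else 0)"
    by (rule Bochner_Integration.integrable_cong[THEN iffD1, OF refl _ i2]) (simp add: c2)
  have "(\<integral>\<omega>. (if X \<omega> \<le> v then 1 / (survf M X (X \<omega>) * survm M X (X \<omega>)) else 0) \<partial>M)
      = (\<integral>\<omega>. indicator {0<..v} (X \<omega>) / (S (X \<omega>) * Sm (X \<omega>)) \<partial>M)"
    by (rule Bochner_Integration.integral_cong[OF refl c1])
  also have "\<dots> = (\<integral>x. indicator {0<..v} x / (S x * Sm x) \<partial>distr M borel X)"
    by (rule integral_distr[OF X m1, symmetric])
  also have "\<dots> = 1 / survf M X v - 1" using L1r(2)[OF v(1) v'] by (simp add: SS)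
  finally show "(\<integral>\<omega>. (if X \<omega> \<le> v then 1 / (survf M X (X \<omega>) * survm M X (X \<omega>)) else 0) \<partial>M) = 1 / survf M X v - 1" .
  have "(\<integral>\<omega>. (if X \<omega> < v then 1 / (survf M X (X \<omega>) * survm M X (X \<omega>)) else 0) \<partial>M)
      = (\<integral>\<omega>. indicator {0<..<v} (X \<omega>) / (S (X \<omega>) * Sm (X \<omega>)) \<partial>M)"
    by (rule Bochner_Integration.integral_cong[OF refl c2])
  also have "\<dots> = (\<integral>x. indicator {0<..<v} x / (S x * Sm x) \<partial>distr M borel X)"
    by (rule integral_distr[OF X m2, symmetric])
  also have "\<dots> = 1 / survm M X v - 1" using L2r(2)[OF v(1) v'] by (simp add: SS)
  finally show "(\<integral>\<omega>. (if X \<omega> < v then 1 / (survf M X (X \<omega>) * survm M X (X \<omega>)) else 0) \<partial>M) = 1 / survm M X v - 1" .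
qed



lemma intb:
  fixes f :: "'a \<Rightarrow> real"
  assumes "prob_space M" "f \<in> borel_measurable M" "\<And>\<omega>. \<omega> \<in> space M \<Longrightarrow> \<bar>f \<omega>\<bar> \<le> B"
  shows "integrable M f"
proof -
  interpret prob_space M by fact
  show ?thesis by (rule integrable_const_bound[where B=B]) (use assms in auto)
qed

lemma survf_antimono: "prob_space M \<Longrightarrow> X \<in> borel_measurable M \<Longrightarrow> antimono (survf M X)"
  unfolding antimono_def survf_def
  by (auto intro!: finite_measure.finite_measure_mono[OF prob_space.axioms(1)])

lemma survm_antimono: "prob_space M \<Longrightarrow> X \<in> borel_measurable M \<Longrightarrow> antimono (survm M X)"
  unfolding antimono_def survm_def
  by (auto intro!: finite_measure.finite_measure_mono[OF prob_space.axioms(1)])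

lemma survf_le_survm: "prob_space M \<Longrightarrow> X \<in> borel_measurable M \<Longrightarrow> survf M X x \<le> survm M X x"
  unfolding survm_def survf_def
  by (auto intro!: finite_measure.finite_measure_mono[OF prob_space.axioms(1)])

lemma survm_le_survf: "prob_space M \<Longrightarrow> X \<in> borel_measurable M \<Longrightarrow> x < y \<Longrightarrow> survm M X y \<le> survf M X x"
  unfolding survm_def survf_def
  by (auto intro!: finite_measure.finite_measure_mono[OF prob_space.axioms(1)])

lemma survf_mono_rv: "prob_space M \<Longrightarrow> Y \<in> borel_measurable M \<Longrightarrow> (\<And>\<omega>. \<omega> \<in> space M \<Longrightarrow> X \<omega> \<le> Y \<omega>)
   \<Longrightarrow> survf M X x \<le> survf M Y x"
  unfolding survf_def
  by (rule finite_measure.finite_measure_mono[OF prob_space.axioms(1)]) (auto intro: less_le_trans)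

lemma survm_mono_rv: "prob_space M \<Longrightarrow> Y \<in> borel_measurable M \<Longrightarrow> (\<And>\<omega>. \<omega> \<in> space M \<Longrightarrow> X \<omega> \<le> Y \<omega>)
   \<Longrightarrow> survm M X x \<le> survm M Y x"
  unfolding survm_def
  by (rule finite_measure.finite_measure_mono[OF prob_space.axioms(1)]) (auto intro: order_trans)

lemma leftlim_survf:
  assumes P: "prob_space M" and X: "X \<in> borel_measurable M"
  shows "leftlim (survf M X) = survm M X"
proof
  fix a
  interpret real_distribution "distr M borel X" using X by (simp add: prob_space.real_distribution_distr[OF P])
  have e1: "survf M X x = 1 - cdf (distr M borel X) x" for x
  proof -
    have "{x<..} = space (distr M borel X) - {..x}" by auto
    then have "measure (distr M borel X) {x<..} = 1 - cdf (distr M borel X) x"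
      using prob_compl[of "{..x}"] by (simp add: cdf_def)
    moreover have "X -` {x<..} \<inter> space M = {\<omega>\<in>space M. X \<omega> > x}" by auto
    ultimately show ?thesis using X by (simp add: survf_def measure_distr)
  qed
  have e2: "survm M X a = 1 - measure (distr M borel X) {..<a}"
  proof -
    have "{a..} = space (distr M borel X) - {..<a}" by auto
    then have "measure (distr M borel X) {a..} = 1 - measure (distr M borel X) {..<a}"
      using prob_compl[of "{..<a}"] by simp
    moreover have "X -` {a..} \<inter> space M = {\<omega>\<in>space M. X \<omega> \<ge> a}" by auto
    ultimately show ?thesis using X by (simp add: survm_def measure_distr)
  qed
  have "((\<lambda>x. 1 - cdf (distr M borel X) x) \<longlongrightarrow> 1 - measure (distr M borel X) {..<a}) (at_left a)"
    by (intro tendsto_intros cdf_at_left)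
  then have "(survf M X \<longlongrightarrow> survm M X a) (at_left a)" unfolding e1[abs_def] e2 .
  then show "leftlim (survf M X) a = survm M X a"
    unfolding leftlim_def by (rule tendsto_Lim[OF trivial_limit_at_left_real])
qed

lemma subdistr_integral:
  fixes X :: "'a \<Rightarrow> real" and f :: "real \<Rightarrow> real"
  assumes P: "prob_space M" and X[measurable]: "X \<in> borel_measurable M"
    and Pm[measurable]: "Measurable.pred M Q" and f[measurable]: "f \<in> borel_measurable borel"
    and A[measurable]: "A \<in> sets borel"
  shows "(LINT s:A|subdistr M X Q. f s) = (\<integral>\<omega>. (if Q \<omega> \<and> X \<omega> \<in> A then f (X \<omega>) else 0) \<partial>M)"
proof -
  have eq: "(\<lambda>\<omega>. indicator {\<omega>. Q \<omega>} \<omega> :: ennreal) = (\<lambda>\<omega>. ennreal (indicator {\<omega>. Q \<omega>} \<omega>))"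
    by (auto simp: indicator_def)
  have Xd: "X \<in> measurable (density M (\<lambda>\<omega>. ennreal (indicator {\<omega>. Q \<omega>} \<omega>))) borel"
    using X by (simp add: measurable_cong_sets[OF sets_density refl])
  have mi: "(\<lambda>\<omega>. indicator {\<omega>. Q \<omega>} \<omega> :: real) \<in> borel_measurable M"
  proof -
    have "{\<omega>. Q \<omega>} \<inter> space M \<in> sets M" using Pm by (simp add: pred_def Collect_conj_eq[symmetric] Int_commute)
    then show ?thesis by (simp add: borel_measurable_indicator')
  qed
  have fm: "(\<lambda>s. indicator A s *\<^sub>R f s) \<in> borel_measurable borel" by measurable
  have "(LINT s:A|subdistr M X Q. f s) = (\<integral>s. indicator A s *\<^sub>R f s \<partial>distr (density M (\<lambda>\<omega>. ennreal (indicator {\<omega>. Q \<omega>} \<omega>))) borel X)"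
    unfolding set_lebesgue_integral_def subdistr_def eq ..
  also have "\<dots> = (\<integral>\<omega>. indicator A (X \<omega>) *\<^sub>R f (X \<omega>) \<partial>density M (\<lambda>\<omega>. ennreal (indicator {\<omega>. Q \<omega>} \<omega>)))"
    by (rule integral_distr[OF Xd fm])
  also have "\<dots> = (\<integral>\<omega>. indicator {\<omega>. Q \<omega>} \<omega> *\<^sub>R (indicator A (X \<omega>) *\<^sub>R f (X \<omega>)) \<partial>M)"
    by (rule integral_density) (auto simp: mi)
  also have "\<dots> = (\<integral>\<omega>. (if Q \<omega> \<and> X \<omega> \<in> A then f (X \<omega>) else 0) \<partial>M)"
    by (rule Bochner_Integration.integral_cong) (auto simp: indicator_def)
  finally show ?thesis .
qed



lemma obsT_eq: "obsT T C = (\<lambda>\<omega>. min (T \<omega>) (C \<omega>))" by (auto simp: obsT_def fun_eq_iff)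
lemma obsD_eq: "obsD T D C = (\<lambda>\<omega>. if T \<omega> \<le> C \<omega> then D \<omega> else 0)" by (auto simp: obsD_def fun_eq_iff)

lemma inv_le_inv: "0 < (a::real) \<Longrightarrow> a \<le> b \<Longrightarrow> 1 / b \<le> 1 / a"
  by (simp add: frac_le)

locale setting =
  fixes M :: "'a measure" and T C :: "'a \<Rightarrow> real" and D :: "'a \<Rightarrow> nat" and d :: nat and t :: real
  assumes P: "prob_space M" and d1: "d \<ge> 1"
    and Tm[measurable]: "T \<in> borel_measurable M" and Cm[measurable]: "C \<in> borel_measurable M"
    and Dm[measurable]: "D \<in> measurable M (count_space UNIV)"
    and Tpos: "\<forall>\<omega>\<in>space M. T \<omega> > 0" and Cpos: "\<forall>\<omega>\<in>space M. C \<omega> > 0"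
    and Dr: "\<forall>\<omega>\<in>space M. D \<omega> \<in> {1..d}"
    and t0: "t \<ge> 0" and St: "survf M (obsT T C) t > 0"
begin

sublocale prob_space M by (rule P)

abbreviation "U \<equiv> obsT T C"

lemma Um[measurable]: "U \<in> borel_measurable M" unfolding obsT_eq by measurable
lemma ODm[measurable]: "obsD T D C \<in> measurable M (count_space UNIV)" unfolding obsD_eq by measurable

lemma Upos: "\<omega> \<in> space M \<Longrightarrow> U \<omega> > 0" using Tpos Cpos by (auto simp: obsT_def)

lemma sT[measurable]: "survf M T \<in> borel_measurable borel"
  by (rule antimono_borel[OF survf_antimono[OF P Tm]])
lemma sTm[measurable]: "survm M T \<in> borel_measurable borel"
  by (rule antimono_borel[OF survm_antimono[OF P Tm]])
lemma sU[measurable]: "survf M U \<in> borel_measurable borel"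
  by (rule antimono_borel[OF survf_antimono[OF P Um]])
lemma sUm[measurable]: "survm M U \<in> borel_measurable borel"
  by (rule antimono_borel[OF survm_antimono[OF P Um]])
lemma sC[measurable]: "survf M C \<in> borel_measurable borel"
  by (rule antimono_borel[OF survf_antimono[OF P Cm]])
lemma sCm[measurable]: "survm M C \<in> borel_measurable borel"
  by (rule antimono_borel[OF survm_antimono[OF P Cm]])

lemma UleT: "survf M U x \<le> survf M T x"
  by (rule survf_mono_rv[OF P Tm]) (auto simp: obsT_def)
lemma UleC: "survf M U x \<le> survf M C x"
  by (rule survf_mono_rv[OF P Cm]) (auto simp: obsT_def)
lemma UmleTm: "survm M U x \<le> survm M T x"
  by (rule survm_mono_rv[OF P Tm]) (auto simp: obsT_def)
lemma UmleCm: "survm M U x \<le> survm M C x"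
  by (rule survm_mono_rv[OF P Cm]) (auto simp: obsT_def)

lemma SU_le: "x \<le> t \<Longrightarrow> survf M U t \<le> survf M U x"
  using survf_antimono[OF P Um] by (auto simp: antimono_def)
lemma SUm_ge: "x \<le> t \<Longrightarrow> survf M U t \<le> survm M U x"
proof -
  assume "x \<le> t"
  then have "survm M U t \<le> survm M U x" using survm_antimono[OF P Um] by (auto simp: antimono_def)
  moreover have "survf M U t \<le> survm M U t" by (rule survf_le_survm[OF P Um])
  ultimately show ?thesis by linarith
qed

lemma ST_ge: "x \<le> t \<Longrightarrow> survf M U t \<le> survf M T x" using SU_le UleT order_trans by blast
lemma STm_ge: "x \<le> t \<Longrightarrow> survf M U t \<le> survm M T x" using SUm_ge UmleTm order_trans by blast
lemma K_ge: "x \<le> t \<Longrightarrow> survf M U t \<le> survf M C x" using SU_le UleC order_trans by blast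
lemma Km_ge: "x \<le> t \<Longrightarrow> survf M U t \<le> survm M C x" using SUm_ge UmleCm order_trans by blast

lemma survf_le1: "survf M X x \<le> 1" unfolding survf_def by simp
lemma survm_le1: "survm M X x \<le> 1" unfolding survm_def by simp
lemma survf_nn: "0 \<le> survf M X x" unfolding survf_def by simp
lemma survm_nn: "0 \<le> survm M X x" unfolding survm_def by simp


lemma SUt: "survf M U t > 0" using St .

lemma part1:
  "condprob M (\<lambda>\<omega>. obsT T C \<omega> < t) (\<lambda>\<omega>. T \<omega> \<ge> t) =
       (LINT s:{0<..<t}|Ftmeas M T D C 0. 1 / survf M T s)
       + ((\<Sum>j\<in>{1..d}. LINT s:{0<..<t}|Ftmeas M T D C j.
              (leftlim (survf M (obsT T C)) s / survf M T s) * (1 / leftlim (survf M (obsT T C)) s))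
          - (\<Sum>j\<in>{1..d}. LINT s:{0<..<t}|Fmeas M T D j.
              (leftlim (survf M (obsT T C)) s / survf M T s) * (1 / leftlim (survf M T) s)))"
proof -
  let ?ST = "survf M T" and ?STm = "survm M T" and ?SU = "survf M U" and ?SUm = "survm M U"
  note LL = leftlim_survf[OF P Um] leftlim_survf[OF P Tm]
  have a0: "0 < ?SU t" by (rule SUt)
  have b1: "1 / ?ST x \<le> 1 / ?SU t" if "x \<le> t" for x
    using inv_le_inv[OF a0 ST_ge[OF that]] .
  have b1': "0 < ?ST x" if "x \<le> t" for x using a0 ST_ge[OF that] by linarith
  have b2': "0 < ?STm x" if "x \<le> t" for x using a0 STm_ge[OF that] by linarith
  have b3': "0 < ?SUm x" if "x \<le> t" for x using a0 SUm_ge[OF that] by linarith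
  have STmt: "0 < ?STm t" using b2' by simp
  have nzU: "?SUm x \<noteq> 0" if "x < t" for x using b3'[of x] that by simp
  have I0: "(LINT s:{0<..<t}|Ftmeas M T D C 0. 1 / ?ST s) =
      (\<integral>\<omega>. (if C \<omega> < T \<omega> \<and> C \<omega> < t then 1 / ?ST (C \<omega>) else 0) \<partial>M)"
    unfolding Ftmeas_def
    apply (subst subdistr_integral[OF P Um])
       apply measurable
    apply (rule Bochner_Integration.integral_cong[OF refl])
    using Dr Cpos by (auto simp: obsD_def obsT_def)
  have I1: "(\<Sum>j\<in>{1..d}. LINT s:{0<..<t}|Ftmeas M T D C j. (?SUm s / ?ST s) * (1 / ?SUm s)) =
      (\<integral>\<omega>. (if T \<omega> \<le> C \<omega> \<and> T \<omega> < t then 1 / ?ST (T \<omega>) else 0) \<partial>M)"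
  proof -
    have "(LINT s:{0<..<t}|Ftmeas M T D C j. (?SUm s / ?ST s) * (1 / ?SUm s)) =
        (\<integral>\<omega>. (if obsD T D C \<omega> = j \<and> U \<omega> < t then 1 / ?ST (U \<omega>) else 0) \<partial>M)" for j
      unfolding Ftmeas_def
      apply (subst subdistr_integral[OF P Um])
         apply measurable
      apply (rule Bochner_Integration.integral_cong[OF refl])
      using Upos nzU by auto
    then have "(\<Sum>j\<in>{1..d}. LINT s:{0<..<t}|Ftmeas M T D C j. (?SUm s / ?ST s) * (1 / ?SUm s)) =
        (\<Sum>j\<in>{1..d}. \<integral>\<omega>. (if obsD T D C \<omega> = j \<and> U \<omega> < t then 1 / ?ST (U \<omega>) else 0) \<partial>M)"
      by simp
    also have "\<dots> = (\<integral>\<omega>. (\<Sum>j\<in>{1..d}. if obsD T D C \<omega> = j \<and> U \<omega> < t then 1 / ?ST (U \<omega>) else 0) \<partial>M)"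
    proof (rule Bochner_Integration.integral_sum[where f="\<lambda>j \<omega>. if obsD T D C \<omega> = j \<and> U \<omega> < t then 1 / ?ST (U \<omega>) else 0", symmetric])
      fix j
      show "integrable M (\<lambda>\<omega>. if obsD T D C \<omega> = j \<and> U \<omega> < t then 1 / ?ST (U \<omega>) else 0)"
        by (rule intb[OF P, where B="1 / ?SU t"]) (use b1 b1' a0 in \<open>auto simp: less_imp_le\<close>)
    qed
    also have "\<dots> = (\<integral>\<omega>. (if T \<omega> \<le> C \<omega> \<and> T \<omega> < t then 1 / ?ST (T \<omega>) else 0) \<partial>M)"
    proof (rule Bochner_Integration.integral_cong[OF refl])
      fix \<omega> assume w: "\<omega> \<in> space M"
      have "(\<Sum>j\<in>{1..d}. if obsD T D C \<omega> = j \<and> U \<omega> < t then 1 / ?ST (U \<omega>) else 0)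
          = (\<Sum>j\<in>{1..d}. if j = obsD T D C \<omega> then (if U \<omega> < t then 1 / ?ST (U \<omega>) else 0) else 0)"
        by (rule sum.cong) auto
      also have "\<dots> = (if obsD T D C \<omega> \<in> {1..d} then (if U \<omega> < t then 1 / ?ST (U \<omega>) else 0) else 0)"
        by (subst sum.delta) auto
      also have "\<dots> = (if T \<omega> \<le> C \<omega> \<and> T \<omega> < t then 1 / ?ST (T \<omega>) else 0)"
        using Dr w by (auto simp: obsD_def obsT_def)
      finally show "(\<Sum>j\<in>{1..d}. if obsD T D C \<omega> = j \<and> U \<omega> < t then 1 / ?ST (U \<omega>) else 0)
          = (if T \<omega> \<le> C \<omega> \<and> T \<omega> < t then 1 / ?ST (T \<omega>) else 0)" .
    qed
    finally show ?thesis .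
  qed
  have bnd2: "\<bar>?SUm x / (?ST x * ?STm x)\<bar> \<le> 1 / (?SU t * ?SU t)" if "x \<le> t" for x
  proof -
    have "?SUm x / (?ST x * ?STm x) \<le> 1 / (?ST x * ?STm x)"
      using b1'[OF that] b2'[OF that] survm_le1[of U x] by (simp add: divide_right_mono)
    also have "\<dots> \<le> 1 / (?SU t * ?SU t)"
      apply (rule inv_le_inv)
      using a0 apply simp
      by (rule mult_mono) (use ST_ge[OF that] STm_ge[OF that] a0 in auto)
    finally show ?thesis using b1'[OF that] b2'[OF that] survm_nn[of U x] by simp
  qed
  have I2: "(\<Sum>j\<in>{1..d}. LINT s:{0<..<t}|Fmeas M T D j. (?SUm s / ?ST s) * (1 / ?STm s)) =
      (\<integral>\<omega>. (if T \<omega> < t then ?SUm (T \<omega>) / (?ST (T \<omega>) * ?STm (T \<omega>)) else 0) \<partial>M)"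
  proof -
    have "(LINT s:{0<..<t}|Fmeas M T D j. (?SUm s / ?ST s) * (1 / ?STm s)) =
        (\<integral>\<omega>. (if D \<omega> = j \<and> T \<omega> < t then ?SUm (T \<omega>) / (?ST (T \<omega>) * ?STm (T \<omega>)) else 0) \<partial>M)" for j
      unfolding Fmeas_def
      apply (subst subdistr_integral[OF P Tm])
         apply measurable
      apply (rule Bochner_Integration.integral_cong[OF refl])
      using Tpos by auto
    then have "(\<Sum>j\<in>{1..d}. LINT s:{0<..<t}|Fmeas M T D j. (?SUm s / ?ST s) * (1 / ?STm s)) =
        (\<Sum>j\<in>{1..d}. \<integral>\<omega>. (if D \<omega> = j \<and> T \<omega> < t then ?SUm (T \<omega>) / (?ST (T \<omega>) * ?STm (T \<omega>)) else 0) \<partial>M)"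
      by simp
    also have "\<dots> = (\<integral>\<omega>. (\<Sum>j\<in>{1..d}. if D \<omega> = j \<and> T \<omega> < t then ?SUm (T \<omega>) / (?ST (T \<omega>) * ?STm (T \<omega>)) else 0) \<partial>M)"
    proof (rule Bochner_Integration.integral_sum[where f="\<lambda>j \<omega>. if D \<omega> = j \<and> T \<omega> < t then ?SUm (T \<omega>) / (?ST (T \<omega>) * ?STm (T \<omega>)) else 0", symmetric])
      fix j
      show "integrable M (\<lambda>\<omega>. if D \<omega> = j \<and> T \<omega> < t then ?SUm (T \<omega>) / (?ST (T \<omega>) * ?STm (T \<omega>)) else 0)"
        by (rule intb[OF P, where B="1 / (?SU t * ?SU t)"]) (use bnd2 a0 in \<open>auto simp: less_imp_le\<close>)
    qed
    also have "\<dots> = (\<integral>\<omega>. (if T \<omega> < t then ?SUm (T \<omega>) / (?ST (T \<omega>) * ?STm (T \<omega>)) else 0) \<partial>M)"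
    proof (rule Bochner_Integration.integral_cong[OF refl])
      fix \<omega> assume w: "\<omega> \<in> space M"
      have "(\<Sum>j\<in>{1..d}. if D \<omega> = j \<and> T \<omega> < t then ?SUm (T \<omega>) / (?ST (T \<omega>) * ?STm (T \<omega>)) else 0)
          = (\<Sum>j\<in>{1..d}. if j = D \<omega> then (if T \<omega> < t then ?SUm (T \<omega>) / (?ST (T \<omega>) * ?STm (T \<omega>)) else 0) else 0)"
        by (rule sum.cong) auto
      also have "\<dots> = (if D \<omega> \<in> {1..d} then (if T \<omega> < t then ?SUm (T \<omega>) / (?ST (T \<omega>) * ?STm (T \<omega>)) else 0) else 0)"
        by (subst sum.delta) auto
      also have "\<dots> = (if T \<omega> < t then ?SUm (T \<omega>) / (?ST (T \<omega>) * ?STm (T \<omega>)) else 0)"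
        using Dr w by auto
      finally show "(\<Sum>j\<in>{1..d}. if D \<omega> = j \<and> T \<omega> < t then ?SUm (T \<omega>) / (?ST (T \<omega>) * ?STm (T \<omega>)) else 0)
          = (if T \<omega> < t then ?SUm (T \<omega>) / (?ST (T \<omega>) * ?STm (T \<omega>)) else 0)" .
    qed
    finally show ?thesis .
  qed
  define F where "F \<omega> \<omega>' = (if T \<omega> < t \<and> T \<omega> \<le> U \<omega>' then 1 / (?ST (T \<omega>) * ?STm (T \<omega>)) else 0)" for \<omega> \<omega>'
  have binv: "1 / (?ST x * ?STm x) \<le> 1 / (?SU t * ?SU t)" if "x \<le> t" for x
    apply (rule inv_le_inv)
    using a0 apply simp
    by (rule mult_mono) (use ST_ge[OF that] STm_ge[OF that] a0 in auto)
  have Fb: "\<bar>F \<omega> \<omega>'\<bar> \<le> 1 / (?SU t * ?SU t)" for \<omega> \<omega>'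
    unfolding F_def using binv b1' b2' a0 by (auto simp: less_imp_le)
  have h_eq: "(if T \<omega> < t then ?SUm (T \<omega>) / (?ST (T \<omega>) * ?STm (T \<omega>)) else 0) = (\<integral>\<omega>'. F \<omega> \<omega>' \<partial>M)"
    if w: "\<omega> \<in> space M" for \<omega>
  proof (cases "T \<omega> < t")
    case True
    have "(\<integral>\<omega>'. F \<omega> \<omega>' \<partial>M) = (\<integral>\<omega>'. indicator {\<omega>'\<in>space M. T \<omega> \<le> U \<omega>'} \<omega>' * (1 / (?ST (T \<omega>) * ?STm (T \<omega>))) \<partial>M)"
      by (rule Bochner_Integration.integral_cong[OF refl]) (use True in \<open>auto simp: F_def indicator_def\<close>)
    also have "\<dots> = ?SUm (T \<omega>) * (1 / (?ST (T \<omega>) * ?STm (T \<omega>)))"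
      by (simp add: survm_def Int_absorb2 Collect_conj_eq[symmetric])
    finally show ?thesis using True by simp
  next
    case False
    then show ?thesis by (simp add: F_def)
  qed
  have psf: "pair_sigma_finite M M"
    by (simp add: pair_sigma_finite_def prob_space_imp_sigma_finite P)
  have Fint: "integrable (M \<Otimes>\<^sub>M M) (case_prod F)"
  proof (rule intb[OF prob_space_pair[OF P P], where B="1 / (?SU t * ?SU t)"])
    show "case_prod F \<in> borel_measurable (M \<Otimes>\<^sub>M M)" unfolding F_def[abs_def] by measurable
  qed (use Fb in auto)
  have Fub: "(\<integral>\<omega>. (\<integral>\<omega>'. F \<omega> \<omega>' \<partial>M) \<partial>M) = (\<integral>\<omega>'. (\<integral>\<omega>. F \<omega> \<omega>' \<partial>M) \<partial>M)"
    using pair_sigma_finite.Fubini_integral[OF psf Fint] by simp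
  have inner: "(\<integral>\<omega>. F \<omega> \<omega>' \<partial>M) = (if U \<omega>' < t then 1 / ?ST (U \<omega>') - 1 else 1 / ?STm t - 1)"
    if w: "\<omega>' \<in> space M" for \<omega>'
  proof (cases "U \<omega>' < t")
    case True
    have v: "0 \<le> U \<omega>'" "?ST (U \<omega>') > 0" using Upos[OF w] b1'[of "U \<omega>'"] True by auto
    have "(\<integral>\<omega>. F \<omega> \<omega>' \<partial>M) = (\<integral>\<omega>. (if T \<omega> \<le> U \<omega>' then 1 / (?ST (T \<omega>) * ?STm (T \<omega>)) else 0) \<partial>M)"
      by (rule Bochner_Integration.integral_cong[OF refl]) (use True in \<open>auto simp: F_def\<close>)
    also have "\<dots> = 1 / ?ST (U \<omega>') - 1" by (rule LX(2)[OF P Tm Tpos v])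
    finally show ?thesis using True by simp
  next
    case False
    have v: "0 \<le> t" "?ST t > 0" using t0 b1'[of t] by auto
    have "(\<integral>\<omega>. F \<omega> \<omega>' \<partial>M) = (\<integral>\<omega>. (if T \<omega> < t then 1 / (?ST (T \<omega>) * ?STm (T \<omega>)) else 0) \<partial>M)"
      by (rule Bochner_Integration.integral_cong[OF refl]) (use False in \<open>auto simp: F_def\<close>)
    also have "\<dots> = 1 / ?STm t - 1" by (rule LX(4)[OF P Tm Tpos v])
    finally show ?thesis using False by simp
  qed
  have I2': "(\<integral>\<omega>. (if T \<omega> < t then ?SUm (T \<omega>) / (?ST (T \<omega>) * ?STm (T \<omega>)) else 0) \<partial>M) =
      (\<integral>\<omega>'. (if U \<omega>' < t then 1 / ?ST (U \<omega>') - 1 else 1 / ?STm t - 1) \<partial>M)"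
  proof -
    have "(\<integral>\<omega>. (if T \<omega> < t then ?SUm (T \<omega>) / (?ST (T \<omega>) * ?STm (T \<omega>)) else 0) \<partial>M) = (\<integral>\<omega>. (\<integral>\<omega>'. F \<omega> \<omega>' \<partial>M) \<partial>M)"
      by (rule Bochner_Integration.integral_cong[OF refl h_eq])
    also have "\<dots> = (\<integral>\<omega>'. (\<integral>\<omega>. F \<omega> \<omega>' \<partial>M) \<partial>M)" by (rule Fub)
    also have "\<dots> = (\<integral>\<omega>'. (if U \<omega>' < t then 1 / ?ST (U \<omega>') - 1 else 1 / ?STm t - 1) \<partial>M)"
      by (rule Bochner_Integration.integral_cong[OF refl inner])
    finally show ?thesis .
  qed
  have LHS: "condprob M (\<lambda>\<omega>. U \<omega> < t) (\<lambda>\<omega>. T \<omega> \<ge> t) = (?STm t - ?SUm t) / ?STm t"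
  proof -
    have "{\<omega> \<in> space M. U \<omega> < t \<and> t \<le> T \<omega>} = {\<omega> \<in> space M. t \<le> T \<omega>} - {\<omega> \<in> space M. t \<le> U \<omega>}"
      by (auto simp: obsT_def)
    moreover have "{\<omega> \<in> space M. t \<le> U \<omega>} \<subseteq> {\<omega> \<in> space M. t \<le> T \<omega>}" by (auto simp: obsT_def)
    ultimately have "measure M {\<omega> \<in> space M. U \<omega> < t \<and> t \<le> T \<omega>} = ?STm t - ?SUm t"
      unfolding survm_def by (simp add: finite_measure_Diff)
    then show ?thesis unfolding condprob_def survm_def by simp
  qed
  define g0 where "g0 \<omega> = (if C \<omega> < T \<omega> \<and> C \<omega> < t then 1 / ?ST (C \<omega>) else 0)" for \<omega>
  define g1 where "g1 \<omega> = (if T \<omega> \<le> C \<omega> \<and> T \<omega> < t then 1 / ?ST (T \<omega>) else 0)" for \<omega>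
  define G where "G \<omega> = (if U \<omega> < t then 1 / ?ST (U \<omega>) - 1 else 1 / ?STm t - 1)" for \<omega>
  have ig0: "integrable M g0"
  proof (rule intb[OF P, where B="1 / ?SU t"])
    show "g0 \<in> borel_measurable M" unfolding g0_def[abs_def] by measurable
  qed (use b1 b1' a0 in \<open>auto simp: g0_def less_imp_le\<close>)
  have ig1: "integrable M g1"
  proof (rule intb[OF P, where B="1 / ?SU t"])
    show "g1 \<in> borel_measurable M" unfolding g1_def[abs_def] by measurable
  qed (use b1 b1' a0 in \<open>auto simp: g1_def less_imp_le\<close>)
  have STmt': "1 / ?STm t \<le> 1 / ?SU t" by (rule inv_le_inv[OF a0 STm_ge]) simp
  have iG: "integrable M G"
  proof (rule intb[OF P, where B="1 / ?SU t + 1"])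
    show "G \<in> borel_measurable M" unfolding G_def[abs_def] by measurable
    fix \<omega> assume "\<omega> \<in> space M"
    show "\<bar>G \<omega>\<bar> \<le> 1 / ?SU t + 1"
    proof -
      have p: "0 \<le> 1 / ?ST (U \<omega>)" "0 \<le> 1 / ?STm t" "0 \<le> 1 / ?SU t"
        using survf_nn[of T "U \<omega>"] survm_nn[of T t] survf_nn[of U t] by simp_all
      show ?thesis
      proof (cases "U \<omega> < t")
        case True
        then have "G \<omega> = 1 / ?ST (U \<omega>) - 1" by (simp add: G_def)
        then show ?thesis unfolding abs_le_iff using b1[of "U \<omega>"] True p by linarith
      next
        case False
        then have "G \<omega> = 1 / ?STm t - 1" by (simp add: G_def)
        then show ?thesis unfolding abs_le_iff using STmt' p by linarith
      qed
    qed
  qed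
  have pw: "g0 \<omega> + (g1 \<omega> - G \<omega>) = 1 - indicator {\<omega>\<in>space M. t \<le> U \<omega>} \<omega> * (1 / ?STm t)"
    if "\<omega> \<in> space M" for \<omega>
    using that by (auto simp: g0_def g1_def G_def obsT_def min_def indicator_def)
  have "(\<integral>\<omega>. g0 \<omega> \<partial>M) + ((\<integral>\<omega>. g1 \<omega> \<partial>M) - (\<integral>\<omega>. G \<omega> \<partial>M)) = (\<integral>\<omega>. g0 \<omega> + (g1 \<omega> - G \<omega>) \<partial>M)"
    using ig0 ig1 iG by simp
  also have "\<dots> = (\<integral>\<omega>. 1 - indicator {\<omega>\<in>space M. t \<le> U \<omega>} \<omega> * (1 / ?STm t) \<partial>M)"
    by (rule Bochner_Integration.integral_cong[OF refl pw])
  also have "\<dots> = 1 - ?SUm t * (1 / ?STm t)"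
  proof -
    have A: "{\<omega>\<in>space M. t \<le> U \<omega>} \<in> sets M" by measurable
    have ii: "integrable M (\<lambda>\<omega>. indicator {\<omega>\<in>space M. t \<le> U \<omega>} \<omega> * (1 / ?STm t))"
      by (intro integrable_mult_left integrable_real_indicator A) (simp add: emeasure_eq_measure)
    have "(\<integral>\<omega>. 1 - indicator {\<omega>\<in>space M. t \<le> U \<omega>} \<omega> * (1 / ?STm t) \<partial>M)
        = (\<integral>\<omega>. 1 \<partial>M) - (\<integral>\<omega>. indicator {\<omega>\<in>space M. t \<le> U \<omega>} \<omega> * (1 / ?STm t) \<partial>M)"
      by (rule Bochner_Integration.integral_diff[OF _ ii]) simp
    also have "\<dots> = 1 - ?SUm t * (1 / ?STm t)"
      unfolding integral_mult_left_zero integral_indicator by (simp add: survm_def Int_absorb2 prob_space)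
    finally show ?thesis .
  qed
  finally have fin: "(\<integral>\<omega>. g0 \<omega> \<partial>M) + ((\<integral>\<omega>. g1 \<omega> \<partial>M) - (\<integral>\<omega>. G \<omega> \<partial>M)) = 1 - ?SUm t * (1 / ?STm t)" .
  have "(?STm t - ?SUm t) / ?STm t = 1 - ?SUm t * (1 / ?STm t)" using STmt by (simp add: field_simps)
  then show ?thesis
    unfolding LL LHS I0 I1 I2 I2'
    using fin by (simp add: g0_def g1_def G_def)
qed


lemma part2:
  "condprob M (\<lambda>\<omega>. T \<omega> \<le> t) (\<lambda>\<omega>. C \<omega> \<ge> t) =
       (\<Sum>j\<in>{1..d}. LINT s:{0<..t}|Ftmeas M T D C j. 1 / leftlim (survf M C) s)
       + ((LINT s:{0<..<t}|Ftmeas M T D C 0.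
              (Scheck M T D C d s / survf M C s) * (1 / (1 - dHtil M T D C d s))
                * (1 / leftlim (survf M (obsT T C)) s))
          - (LINT s:{0<..<t}|Gmeas M C.
              (Scheck M T D C d s / survf M C s) * (1 / leftlim (survf M C) s)))"
proof -
  let ?K = "survf M C" and ?Km = "survm M C" and ?SU = "survf M U" and ?SUm = "survm M U"
  note LL = leftlim_survf[OF P Um] leftlim_survf[OF P Cm]
  have a0: "0 < ?SU t" by (rule SUt)
  have K_pos: "0 < ?K x" if "x \<le> t" for x using a0 K_ge[OF that] by linarith
  have Km_pos: "0 < ?Km x" if "x \<le> t" for x using a0 Km_ge[OF that] by linarith
  have SUm_pos: "0 < ?SUm x" if "x \<le> t" for x using a0 SUm_ge[OF that] by linarith
  have bK: "1 / ?K x \<le> 1 / ?SU t" if "x \<le> t" for x using inv_le_inv[OF a0 K_ge[OF that]] .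
  have bKm: "1 / ?Km x \<le> 1 / ?SU t" if "x \<le> t" for x using inv_le_inv[OF a0 Km_ge[OF that]] .
  have bSUm: "1 / ?SUm x \<le> 1 / ?SU t" if "x \<le> t" for x using inv_le_inv[OF a0 SUm_ge[OF that]] .
  define Hf where "Hf x = (\<integral>\<omega>. (if T \<omega> \<le> C \<omega> \<and> T \<omega> \<le> x then 1 / ?SUm (T \<omega>) else 0) \<partial>M)" for x
  have Htil_eq: "Htil M T D C d x = Hf x" if xt: "x \<le> t" for x
  proof -
    have "(LINT s:{0<..x}|Ftmeas M T D C j. 1 / leftlim (survf M U) s) =
        (\<integral>\<omega>. (if obsD T D C \<omega> = j \<and> U \<omega> \<le> x then 1 / ?SUm (U \<omega>) else 0) \<partial>M)" for j
      unfolding Ftmeas_def LL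
      apply (subst subdistr_integral[OF P Um])
         apply measurable
      apply (rule Bochner_Integration.integral_cong[OF refl])
      using Upos by auto
    then have "Htil M T D C d x =
        (\<Sum>j\<in>{1..d}. \<integral>\<omega>. (if obsD T D C \<omega> = j \<and> U \<omega> \<le> x then 1 / ?SUm (U \<omega>) else 0) \<partial>M)"
      unfolding Htil_def by simp
    also have "\<dots> = (\<integral>\<omega>. (\<Sum>j\<in>{1..d}. if obsD T D C \<omega> = j \<and> U \<omega> \<le> x then 1 / ?SUm (U \<omega>) else 0) \<partial>M)"
    proof (rule Bochner_Integration.integral_sum[where f="\<lambda>j \<omega>. if obsD T D C \<omega> = j \<and> U \<omega> \<le> x then 1 / ?SUm (U \<omega>) else 0", symmetric])
      fix j
      show "integrable M (\<lambda>\<omega>. if obsD T D C \<omega> = j \<and> U \<omega> \<le> x then 1 / ?SUm (U \<omega>) else 0)"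
      proof (rule intb[OF P, where B="1 / ?SU t"])
        fix \<omega> assume "\<omega> \<in> space M"
        show "\<bar>if obsD T D C \<omega> = j \<and> U \<omega> \<le> x then 1 / ?SUm (U \<omega>) else 0\<bar> \<le> 1 / ?SU t"
          using bSUm[of "U \<omega>"] SUm_pos[of "U \<omega>"] xt a0 by auto
      qed measurable
    qed
    also have "\<dots> = Hf x" unfolding Hf_def
    proof (rule Bochner_Integration.integral_cong[OF refl])
      fix \<omega> assume w: "\<omega> \<in> space M"
      have "(\<Sum>j\<in>{1..d}. if obsD T D C \<omega> = j \<and> U \<omega> \<le> x then 1 / ?SUm (U \<omega>) else 0)
          = (\<Sum>j\<in>{1..d}. if j = obsD T D C \<omega> then (if U \<omega> \<le> x then 1 / ?SUm (U \<omega>) else 0) else 0)"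
        by (rule sum.cong) auto
      also have "\<dots> = (if obsD T D C \<omega> \<in> {1..d} then (if U \<omega> \<le> x then 1 / ?SUm (U \<omega>) else 0) else 0)"
        by (subst sum.delta) auto
      also have "\<dots> = (if T \<omega> \<le> C \<omega> \<and> T \<omega> \<le> x then 1 / ?SUm (T \<omega>) else 0)"
        using Dr w by (auto simp: obsD_def obsT_def)
      finally show "(\<Sum>j\<in>{1..d}. if obsD T D C \<omega> = j \<and> U \<omega> \<le> x then 1 / ?SUm (U \<omega>) else 0)
          = (if T \<omega> \<le> C \<omega> \<and> T \<omega> \<le> x then 1 / ?SUm (T \<omega>) else 0)" .
    qed
    finally show ?thesis .
  qed
  define Hm where "Hm s = (\<integral>\<omega>. (if T \<omega> \<le> C \<omega> \<and> T \<omega> < s then 1 / ?SUm (T \<omega>) else 0) \<partial>M)" for s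
  have LLH: "leftlim (Htil M T D C d) s = Hm s" if s: "0 < s" "s < t" for s
  proof -
    have "(Htil M T D C d \<longlongrightarrow> Hm s) (at_left s)"
    proof (rule tendsto_at_left_sequentially[OF s(1)])
      fix X :: "nat \<Rightarrow> real" assume X: "\<And>n. X n < s" "\<And>n. 0 < X n" "incseq X" "X \<longlonglongrightarrow> s"
      have "(\<lambda>n. Hf (X n)) \<longlonglongrightarrow> Hm s" unfolding Hf_def Hm_def
      proof (rule integral_dominated_convergence[where w="\<lambda>_. 1 / ?SU t"])
        show "AE \<omega> in M. (\<lambda>n. if T \<omega> \<le> C \<omega> \<and> T \<omega> \<le> X n then 1 / ?SUm (T \<omega>) else 0)
            \<longlonglongrightarrow> (if T \<omega> \<le> C \<omega> \<and> T \<omega> < s then 1 / ?SUm (T \<omega>) else 0)"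
        proof (rule AE_I2)
          fix \<omega>
          show "(\<lambda>n. if T \<omega> \<le> C \<omega> \<and> T \<omega> \<le> X n then 1 / ?SUm (T \<omega>) else 0)
            \<longlonglongrightarrow> (if T \<omega> \<le> C \<omega> \<and> T \<omega> < s then 1 / ?SUm (T \<omega>) else 0)"
          proof (cases "T \<omega> < s")
            case True
            have "eventually (\<lambda>n. T \<omega> < X n) sequentially"
              using order_tendstoD(1)[OF X(4) True] .
            then have "eventually (\<lambda>n. (if T \<omega> \<le> C \<omega> \<and> T \<omega> \<le> X n then 1 / ?SUm (T \<omega>) else 0)
                = (if T \<omega> \<le> C \<omega> \<and> T \<omega> < s then 1 / ?SUm (T \<omega>) else 0)) sequentially"
              by (rule eventually_mono) (use True in auto)
            then show ?thesis by (rule tendsto_eventually)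
          next
            case False
            then have "\<And>n. \<not> T \<omega> \<le> X n" using X(1) by (meson le_less_trans not_le)
            then show ?thesis using False by simp
          qed
        qed
        fix n
        show "AE \<omega> in M. norm (if T \<omega> \<le> C \<omega> \<and> T \<omega> \<le> X n then 1 / ?SUm (T \<omega>) else 0) \<le> 1 / ?SU t"
        proof (rule AE_I2)
          fix \<omega>
          have "X n \<le> t" using X(1)[of n] s by simp
          then show "norm (if T \<omega> \<le> C \<omega> \<and> T \<omega> \<le> X n then 1 / ?SUm (T \<omega>) else 0) \<le> 1 / ?SU t"
            using bSUm[of "T \<omega>"] SUm_pos[of "T \<omega>"] a0 by auto
        qed
      qed auto
      moreover have "Hf (X n) = Htil M T D C d (X n)" for n using Htil_eq[of "X n"] X(1)[of n] s by simp
      ultimately show "(\<lambda>n. Htil M T D C d (X n)) \<longlonglongrightarrow> Hm s" by simp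
    qed
    then show ?thesis unfolding leftlim_def by (rule tendsto_Lim[OF trivial_limit_at_left_real])
  qed
  define Q where "Q s = measure M {\<omega>\<in>space M. T \<omega> = s \<and> T \<omega> \<le> C \<omega>}" for s
  define W where "W s = measure M {\<omega>\<in>space M. s < T \<omega> \<and> s \<le> C \<omega>}" for s
  have W_anti: "antimono W" unfolding antimono_def W_def
    by (auto intro!: finite_measure_mono)
  have Wm[measurable]: "W \<in> borel_measurable borel" by (rule antimono_borel[OF W_anti])
  have SUm_split: "?SUm s = W s + Q s" for s
  proof -
    have "{\<omega>\<in>space M. s \<le> U \<omega>} = {\<omega>\<in>space M. s < T \<omega> \<and> s \<le> C \<omega>} \<union> {\<omega>\<in>space M. T \<omega> = s \<and> T \<omega> \<le> C \<omega>}"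
      by (auto simp: obsT_def)
    moreover have "{\<omega>\<in>space M. s < T \<omega> \<and> s \<le> C \<omega>} \<inter> {\<omega>\<in>space M. T \<omega> = s \<and> T \<omega> \<le> C \<omega>} = {}" by auto
    ultimately show ?thesis unfolding survm_def W_def Q_def
      by (subst finite_measure_Union[symmetric]) auto
  qed
  have W_ge: "?SU s \<le> W s" for s
    unfolding survf_def W_def by (rule finite_measure_mono) (auto simp: obsT_def)
  have W_pos: "0 < W s" if "s \<le> t" for s using W_ge[of s] SU_le[OF that] a0 by linarith
  have dH: "dHtil M T D C d s = Q s / ?SUm s" if s: "0 < s" "s < t" for s
  proof -
    have st: "s \<le> t" using s by simp
    have i1: "integrable M (\<lambda>\<omega>. if T \<omega> \<le> C \<omega> \<and> T \<omega> \<le> s then 1 / ?SUm (T \<omega>) else 0)"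
    proof (rule intb[OF P, where B="1 / ?SU t"])
      fix \<omega> assume "\<omega> \<in> space M"
      show "\<bar>if T \<omega> \<le> C \<omega> \<and> T \<omega> \<le> s then 1 / ?SUm (T \<omega>) else 0\<bar> \<le> 1 / ?SU t"
        using bSUm[of "T \<omega>"] SUm_pos[of "T \<omega>"] st a0 by auto
    qed measurable
    have i2: "integrable M (\<lambda>\<omega>. if T \<omega> \<le> C \<omega> \<and> T \<omega> < s then 1 / ?SUm (T \<omega>) else 0)"
    proof (rule intb[OF P, where B="1 / ?SU t"])
      fix \<omega> assume "\<omega> \<in> space M"
      show "\<bar>if T \<omega> \<le> C \<omega> \<and> T \<omega> < s then 1 / ?SUm (T \<omega>) else 0\<bar> \<le> 1 / ?SU t"
        using bSUm[of "T \<omega>"] SUm_pos[of "T \<omega>"] st a0 by auto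
    qed measurable
    have "dHtil M T D C d s = Hf s - Hm s"
      unfolding dHtil_def using Htil_eq[OF st] LLH[OF s] by simp
    also have "\<dots> = (\<integral>\<omega>. (if T \<omega> \<le> C \<omega> \<and> T \<omega> \<le> s then 1 / ?SUm (T \<omega>) else 0)
        - (if T \<omega> \<le> C \<omega> \<and> T \<omega> < s then 1 / ?SUm (T \<omega>) else 0) \<partial>M)"
      unfolding Hf_def Hm_def by (rule Bochner_Integration.integral_diff[OF i1 i2, symmetric])
    also have "\<dots> = (\<integral>\<omega>. indicator {\<omega>\<in>space M. T \<omega> = s \<and> T \<omega> \<le> C \<omega>} \<omega> * (1 / ?SUm s) \<partial>M)"
      by (rule Bochner_Integration.integral_cong[OF refl]) (auto simp: indicator_def)
    also have "\<dots> = Q s / ?SUm s"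
      unfolding integral_mult_left_zero integral_indicator Q_def by (simp add: Int_absorb2)
    finally show ?thesis .
  qed
  have oneminus: "1 - dHtil M T D C d s = W s / ?SUm s" if s: "0 < s" "s < t" for s
    using dH[OF s] SUm_split[of s] SUm_pos[of s] s by (simp add: field_simps)
  have Sch: "Scheck M T D C d s = W s" if s: "0 < s" "s < t" for s
    unfolding Scheck_def LL oneminus[OF s] using SUm_pos[of s] s by simp
  have om_nz: "1 - dHtil M T D C d s \<noteq> 0" if s: "0 < s" "s < t" for s
    unfolding oneminus[OF s] using W_pos[of s] SUm_pos[of s] s by simp
  have J1: "(\<Sum>j\<in>{1..d}. LINT s:{0<..t}|Ftmeas M T D C j. 1 / leftlim (survf M C) s) =
      (\<integral>\<omega>. (if T \<omega> \<le> C \<omega> \<and> T \<omega> \<le> t then 1 / ?Km (T \<omega>) else 0) \<partial>M)"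
  proof -
    have "(LINT s:{0<..t}|Ftmeas M T D C j. 1 / leftlim (survf M C) s) =
        (\<integral>\<omega>. (if obsD T D C \<omega> = j \<and> U \<omega> \<le> t then 1 / ?Km (U \<omega>) else 0) \<partial>M)" for j
      unfolding Ftmeas_def LL
      apply (subst subdistr_integral[OF P Um])
         apply measurable
      apply (rule Bochner_Integration.integral_cong[OF refl])
      using Upos by auto
    then have "(\<Sum>j\<in>{1..d}. LINT s:{0<..t}|Ftmeas M T D C j. 1 / leftlim (survf M C) s) =
        (\<Sum>j\<in>{1..d}. \<integral>\<omega>. (if obsD T D C \<omega> = j \<and> U \<omega> \<le> t then 1 / ?Km (U \<omega>) else 0) \<partial>M)"
      by simp
    also have "\<dots> = (\<integral>\<omega>. (\<Sum>j\<in>{1..d}. if obsD T D C \<omega> = j \<and> U \<omega> \<le> t then 1 / ?Km (U \<omega>) else 0) \<partial>M)"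
    proof (rule Bochner_Integration.integral_sum[where f="\<lambda>j \<omega>. if obsD T D C \<omega> = j \<and> U \<omega> \<le> t then 1 / ?Km (U \<omega>) else 0", symmetric])
      fix j
      show "integrable M (\<lambda>\<omega>. if obsD T D C \<omega> = j \<and> U \<omega> \<le> t then 1 / ?Km (U \<omega>) else 0)"
      proof (rule intb[OF P, where B="1 / ?SU t"])
        fix \<omega> assume "\<omega> \<in> space M"
        show "\<bar>if obsD T D C \<omega> = j \<and> U \<omega> \<le> t then 1 / ?Km (U \<omega>) else 0\<bar> \<le> 1 / ?SU t"
          using bKm[of "U \<omega>"] Km_pos[of "U \<omega>"] a0 by auto
      qed measurable
    qed
    also have "\<dots> = (\<integral>\<omega>. (if T \<omega> \<le> C \<omega> \<and> T \<omega> \<le> t then 1 / ?Km (T \<omega>) else 0) \<partial>M)"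
    proof (rule Bochner_Integration.integral_cong[OF refl])
      fix \<omega> assume w: "\<omega> \<in> space M"
      have "(\<Sum>j\<in>{1..d}. if obsD T D C \<omega> = j \<and> U \<omega> \<le> t then 1 / ?Km (U \<omega>) else 0)
          = (\<Sum>j\<in>{1..d}. if j = obsD T D C \<omega> then (if U \<omega> \<le> t then 1 / ?Km (U \<omega>) else 0) else 0)"
        by (rule sum.cong) auto
      also have "\<dots> = (if obsD T D C \<omega> \<in> {1..d} then (if U \<omega> \<le> t then 1 / ?Km (U \<omega>) else 0) else 0)"
        by (subst sum.delta) auto
      also have "\<dots> = (if T \<omega> \<le> C \<omega> \<and> T \<omega> \<le> t then 1 / ?Km (T \<omega>) else 0)"
        using Dr w by (auto simp: obsD_def obsT_def)
      finally show "(\<Sum>j\<in>{1..d}. if obsD T D C \<omega> = j \<and> U \<omega> \<le> t then 1 / ?Km (U \<omega>) else 0)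
          = (if T \<omega> \<le> C \<omega> \<and> T \<omega> \<le> t then 1 / ?Km (T \<omega>) else 0)" .
    qed
    finally show ?thesis .
  qed
  have J2: "(LINT s:{0<..<t}|Ftmeas M T D C 0.
              (Scheck M T D C d s / survf M C s) * (1 / (1 - dHtil M T D C d s))
                * (1 / leftlim (survf M (obsT T C)) s)) =
      (\<integral>\<omega>. (if C \<omega> < T \<omega> \<and> C \<omega> < t then 1 / ?K (C \<omega>) else 0) \<partial>M)"
  proof -
    have "(LINT s:{0<..<t}|Ftmeas M T D C 0.
              (Scheck M T D C d s / survf M C s) * (1 / (1 - dHtil M T D C d s))
                * (1 / leftlim (survf M (obsT T C)) s)) = (LINT s:{0<..<t}|Ftmeas M T D C 0. 1 / ?K s)"
    proof (rule set_lebesgue_integral_cong)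
      show "{0<..<t} \<in> sets (Ftmeas M T D C 0)" by (simp add: Ftmeas_def subdistr_def)
      show "\<forall>x. x \<in> {0<..<t} \<longrightarrow> Scheck M T D C d x / ?K x * (1 / (1 - dHtil M T D C d x)) * (1 / leftlim (survf M (obsT T C)) x) = 1 / ?K x"
      proof (intro allI impI)
        fix x assume x: "x \<in> {0<..<t}"
        then have x': "0 < x" "x < t" by auto
        have sc: "Scheck M T D C d x = ?SUm x * (1 - dHtil M T D C d x)" unfolding Scheck_def LL ..
        then show "Scheck M T D C d x / ?K x * (1 / (1 - dHtil M T D C d x)) * (1 / leftlim (survf M (obsT T C)) x) = 1 / ?K x"
          unfolding LL sc using om_nz[OF x'] SUm_pos[of x] K_pos[of x] x' by (simp add: field_simps)
      qed
    qed
    also have "\<dots> = (\<integral>\<omega>. (if C \<omega> < T \<omega> \<and> C \<omega> < t then 1 / ?K (C \<omega>) else 0) \<partial>M)"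
      unfolding Ftmeas_def
      apply (subst subdistr_integral[OF P Um])
         apply measurable
      apply (rule Bochner_Integration.integral_cong[OF refl])
      using Dr Cpos by (auto simp: obsD_def obsT_def)
    finally show ?thesis .
  qed
  have J3: "(LINT s:{0<..<t}|Gmeas M C. (Scheck M T D C d s / survf M C s) * (1 / leftlim (survf M C) s)) =
      (\<integral>\<omega>. (if C \<omega> < t then W (C \<omega>) / (?K (C \<omega>) * ?Km (C \<omega>)) else 0) \<partial>M)"
  proof -
    have "(LINT s:{0<..<t}|Gmeas M C. (Scheck M T D C d s / survf M C s) * (1 / leftlim (survf M C) s))
        = (LINT s:{0<..<t}|Gmeas M C. W s / (?K s * ?Km s))"
    proof (rule set_lebesgue_integral_cong)
      show "{0<..<t} \<in> sets (Gmeas M C)" by (simp add: Gmeas_def)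
      show "\<forall>x. x \<in> {0<..<t} \<longrightarrow> Scheck M T D C d x / ?K x * (1 / leftlim (survf M C) x) = W x / (?K x * ?Km x)"
        using Sch LL by auto
    qed
    also have "\<dots> = (\<integral>s. indicator {0<..<t} s * (W s / (?K s * ?Km s)) \<partial>distr M borel C)"
      unfolding set_lebesgue_integral_def Gmeas_def by simp
    also have "\<dots> = (\<integral>\<omega>. indicator {0<..<t} (C \<omega>) * (W (C \<omega>) / (?K (C \<omega>) * ?Km (C \<omega>))) \<partial>M)"
      by (rule integral_distr) measurable
    also have "\<dots> = (\<integral>\<omega>. (if C \<omega> < t then W (C \<omega>) / (?K (C \<omega>) * ?Km (C \<omega>)) else 0) \<partial>M)"
      by (rule Bochner_Integration.integral_cong[OF refl]) (use Cpos in \<open>auto simp: indicator_def\<close>)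
    finally show ?thesis .
  qed
  define F where "F \<omega> \<omega>' = (if C \<omega> < t \<and> C \<omega> < T \<omega>' \<and> C \<omega> \<le> C \<omega>' then 1 / (?K (C \<omega>) * ?Km (C \<omega>)) else 0)" for \<omega> \<omega>'
  have binv: "1 / (?K x * ?Km x) \<le> 1 / (?SU t * ?SU t)" if "x \<le> t" for x
    apply (rule inv_le_inv)
    using a0 apply simp
    by (rule mult_mono) (use K_ge[OF that] Km_ge[OF that] a0 in auto)
  have Fb: "\<bar>F \<omega> \<omega>'\<bar> \<le> 1 / (?SU t * ?SU t)" for \<omega> \<omega>'
    unfolding F_def using binv K_pos Km_pos a0 by (auto simp: less_imp_le)
  have h_eq: "(if C \<omega> < t then W (C \<omega>) / (?K (C \<omega>) * ?Km (C \<omega>)) else 0) = (\<integral>\<omega>'. F \<omega> \<omega>' \<partial>M)"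
    if w: "\<omega> \<in> space M" for \<omega>
  proof (cases "C \<omega> < t")
    case True
    have "(\<integral>\<omega>'. F \<omega> \<omega>' \<partial>M) = (\<integral>\<omega>'. indicator {\<omega>'\<in>space M. C \<omega> < T \<omega>' \<and> C \<omega> \<le> C \<omega>'} \<omega>' * (1 / (?K (C \<omega>) * ?Km (C \<omega>))) \<partial>M)"
      by (rule Bochner_Integration.integral_cong[OF refl]) (use True in \<open>auto simp: F_def indicator_def\<close>)
    also have "\<dots> = W (C \<omega>) * (1 / (?K (C \<omega>) * ?Km (C \<omega>)))"
      unfolding integral_mult_left_zero integral_indicator W_def by (simp add: Int_absorb2)
    finally show ?thesis using True by simp
  next
    case False
    then show ?thesis by (simp add: F_def)
  qed
  have psf: "pair_sigma_finite M M"
    by (simp add: pair_sigma_finite_def prob_space_imp_sigma_finite P)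
  have Fint: "integrable (M \<Otimes>\<^sub>M M) (case_prod F)"
  proof (rule intb[OF prob_space_pair[OF P P], where B="1 / (?SU t * ?SU t)"])
    show "case_prod F \<in> borel_measurable (M \<Otimes>\<^sub>M M)" unfolding F_def[abs_def] by measurable
  qed (use Fb in auto)
  have Fub: "(\<integral>\<omega>. (\<integral>\<omega>'. F \<omega> \<omega>' \<partial>M) \<partial>M) = (\<integral>\<omega>'. (\<integral>\<omega>. F \<omega> \<omega>' \<partial>M) \<partial>M)"
    using pair_sigma_finite.Fubini_integral[OF psf Fint] by simp
  have inner: "(\<integral>\<omega>. F \<omega> \<omega>' \<partial>M) = (if C \<omega>' < T \<omega>' \<and> C \<omega>' < t then 1 / ?K (C \<omega>') - 1 else 1 / ?Km (min (T \<omega>') t) - 1)"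
    if w: "\<omega>' \<in> space M" for \<omega>'
  proof (cases "C \<omega>' < T \<omega>' \<and> C \<omega>' < t")
    case True
    have v: "0 \<le> C \<omega>'" "?K (C \<omega>') > 0" using Cpos w K_pos[of "C \<omega>'"] True by auto
    have "(\<integral>\<omega>. F \<omega> \<omega>' \<partial>M) = (\<integral>\<omega>. (if C \<omega> \<le> C \<omega>' then 1 / (?K (C \<omega>) * ?Km (C \<omega>)) else 0) \<partial>M)"
      by (rule Bochner_Integration.integral_cong[OF refl]) (use True in \<open>auto simp: F_def\<close>)
    also have "\<dots> = 1 / ?K (C \<omega>') - 1" by (rule LX(2)[OF P Cm Cpos v])
    finally show ?thesis using True by simp
  next
    case False
    have v: "0 \<le> min (T \<omega>') t" "?K (min (T \<omega>') t) > 0" using Tpos w t0 K_pos[of "min (T \<omega>') t"] by auto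
    have "(\<integral>\<omega>. F \<omega> \<omega>' \<partial>M) = (\<integral>\<omega>. (if C \<omega> < min (T \<omega>') t then 1 / (?K (C \<omega>) * ?Km (C \<omega>)) else 0) \<partial>M)"
      by (rule Bochner_Integration.integral_cong[OF refl]) (use False in \<open>auto simp: F_def\<close>)
    also have "\<dots> = 1 / ?Km (min (T \<omega>') t) - 1" by (rule LX(4)[OF P Cm Cpos v])
    finally show ?thesis by (simp only: if_not_P[OF False])
  qed
  define g1 where "g1 \<omega> = (if T \<omega> \<le> C \<omega> \<and> T \<omega> \<le> t then 1 / ?Km (T \<omega>) else 0)" for \<omega>
  define g2 where "g2 \<omega> = (if C \<omega> < T \<omega> \<and> C \<omega> < t then 1 / ?K (C \<omega>) else 0)" for \<omega>
  define G where "G \<omega> = (if C \<omega> < T \<omega> \<and> C \<omega> < t then 1 / ?K (C \<omega>) - 1 else 1 / ?Km (min (T \<omega>) t) - 1)" for \<omega>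
  have J3': "(\<integral>\<omega>. (if C \<omega> < t then W (C \<omega>) / (?K (C \<omega>) * ?Km (C \<omega>)) else 0) \<partial>M) = (\<integral>\<omega>. G \<omega> \<partial>M)"
  proof -
    have "(\<integral>\<omega>. (if C \<omega> < t then W (C \<omega>) / (?K (C \<omega>) * ?Km (C \<omega>)) else 0) \<partial>M) = (\<integral>\<omega>. (\<integral>\<omega>'. F \<omega> \<omega>' \<partial>M) \<partial>M)"
      by (rule Bochner_Integration.integral_cong[OF refl h_eq])
    also have "\<dots> = (\<integral>\<omega>'. (\<integral>\<omega>. F \<omega> \<omega>' \<partial>M) \<partial>M)" by (rule Fub)
    also have "\<dots> = (\<integral>\<omega>. G \<omega> \<partial>M)"
      by (rule Bochner_Integration.integral_cong[OF refl]) (simp add: inner G_def)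
    finally show ?thesis .
  qed
  have p0: "0 \<le> 1 / ?SU t" using a0 by simp
  have ig1: "integrable M g1"
  proof (rule intb[OF P, where B="1 / ?SU t"])
    show "g1 \<in> borel_measurable M" unfolding g1_def[abs_def] by measurable
    fix \<omega> assume "\<omega> \<in> space M"
    show "\<bar>g1 \<omega>\<bar> \<le> 1 / ?SU t" using bKm[of "T \<omega>"] Km_pos[of "T \<omega>"] p0 by (auto simp: g1_def)
  qed
  have ig2: "integrable M g2"
  proof (rule intb[OF P, where B="1 / ?SU t"])
    show "g2 \<in> borel_measurable M" unfolding g2_def[abs_def] by measurable
    fix \<omega> assume "\<omega> \<in> space M"
    show "\<bar>g2 \<omega>\<bar> \<le> 1 / ?SU t" using bK[of "C \<omega>"] K_pos[of "C \<omega>"] p0 by (auto simp: g2_def)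
  qed
  have iG: "integrable M G"
  proof (rule intb[OF P, where B="1 / ?SU t + 1"])
    show "G \<in> borel_measurable M" unfolding G_def[abs_def] by measurable
    fix \<omega> assume "\<omega> \<in> space M"
    have p: "0 \<le> 1 / ?K (C \<omega>)" "0 \<le> 1 / ?Km (min (T \<omega>) t)"
      using survf_nn[of C "C \<omega>"] survm_nn[of C "min (T \<omega>) t"] by simp_all
    show "\<bar>G \<omega>\<bar> \<le> 1 / ?SU t + 1"
    proof (cases "C \<omega> < T \<omega> \<and> C \<omega> < t")
      case True
      then have "G \<omega> = 1 / ?K (C \<omega>) - 1" by (simp add: G_def)
      then show ?thesis unfolding abs_le_iff using bK[of "C \<omega>"] True p p0 by linarith
    next
      case False
      have "G \<omega> = 1 / ?Km (min (T \<omega>) t) - 1" unfolding G_def by (rule if_not_P[OF False])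
      then show ?thesis unfolding abs_le_iff using bKm[of "min (T \<omega>) t"] p p0 by linarith
    qed
  qed
  define E where "E = {\<omega>\<in>space M. t \<le> C \<omega> \<and> t < T \<omega>}"
  have pw: "g1 \<omega> + (g2 \<omega> - G \<omega>) = 1 - indicator E \<omega> * (1 / ?Km t)"
    if "\<omega> \<in> space M" for \<omega>
    using that by (auto simp: g1_def g2_def G_def E_def min_def indicator_def)
  have Em: "E \<in> sets M" unfolding E_def by measurable
  have "(\<integral>\<omega>. g1 \<omega> \<partial>M) + ((\<integral>\<omega>. g2 \<omega> \<partial>M) - (\<integral>\<omega>. G \<omega> \<partial>M)) = (\<integral>\<omega>. g1 \<omega> + (g2 \<omega> - G \<omega>) \<partial>M)"
    using ig1 ig2 iG by simp
  also have "\<dots> = (\<integral>\<omega>. 1 - indicator E \<omega> * (1 / ?Km t) \<partial>M)"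
    by (rule Bochner_Integration.integral_cong[OF refl pw])
  also have "\<dots> = 1 - measure M E * (1 / ?Km t)"
  proof -
    have ii: "integrable M (\<lambda>\<omega>. indicator E \<omega> * (1 / ?Km t))"
      by (intro integrable_mult_left integrable_real_indicator Em) (simp add: emeasure_eq_measure)
    have "(\<integral>\<omega>. 1 - indicator E \<omega> * (1 / ?Km t) \<partial>M)
        = (\<integral>\<omega>. 1 \<partial>M) - (\<integral>\<omega>. indicator E \<omega> * (1 / ?Km t) \<partial>M)"
      by (rule Bochner_Integration.integral_diff[OF _ ii]) simp
    also have "\<dots> = 1 - measure M E * (1 / ?Km t)"
      unfolding integral_mult_left_zero integral_indicator using Em
      by (simp add: Int_absorb2 prob_space sets.sets_into_space)
    finally show ?thesis .
  qed
  finally have fin: "(\<integral>\<omega>. g1 \<omega> \<partial>M) + ((\<integral>\<omega>. g2 \<omega> \<partial>M) - (\<integral>\<omega>. G \<omega> \<partial>M)) = 1 - measure M E * (1 / ?Km t)" .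
  have LHS: "condprob M (\<lambda>\<omega>. T \<omega> \<le> t) (\<lambda>\<omega>. C \<omega> \<ge> t) = 1 - measure M E * (1 / ?Km t)"
  proof -
    have "{\<omega> \<in> space M. T \<omega> \<le> t \<and> t \<le> C \<omega>} = {\<omega> \<in> space M. t \<le> C \<omega>} - E"
      by (auto simp: E_def)
    moreover have "E \<subseteq> {\<omega> \<in> space M. t \<le> C \<omega>}" by (auto simp: E_def)
    ultimately have "measure M {\<omega> \<in> space M. T \<omega> \<le> t \<and> t \<le> C \<omega>} = ?Km t - measure M E"
      unfolding survm_def using Em by (simp add: finite_measure_Diff)
    then show ?thesis unfolding condprob_def survm_def[symmetric] using Km_pos[of t]
      by (simp add: field_simps)
  qed
  show ?thesis
    unfolding LHS J1 J2 J3 J3' using fin by (simp add: g1_def[abs_def] g2_def[abs_def] G_def[abs_def])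
qed

end


theorem lemma2:
  fixes M :: "'a measure" and T C :: "'a \<Rightarrow> real" and D :: "'a \<Rightarrow> nat"
    and d :: nat and t :: real
  assumes "prob_space M"
    and "d \<ge> 1"
    and "T \<in> borel_measurable M" and "C \<in> borel_measurable M"
    and "D \<in> measurable M (count_space UNIV)"
    and "\<forall>\<omega>\<in>space M. T \<omega> > 0" and "\<forall>\<omega>\<in>space M. C \<omega> > 0"
    and "\<forall>\<omega>\<in>space M. D \<omega> \<in> {1..d}"
    and "t \<ge> 0" and "survf M (obsT T C) t > 0"
  shows
    "(condprob M (\<lambda>\<omega>. obsT T C \<omega> < t) (\<lambda>\<omega>. T \<omega> \<ge> t) =
       (LINT s:{0<..<t}|Ftmeas M T D C 0. 1 / survf M T s)
       + ((\<Sum>j\<in>{1..d}. LINT s:{0<..<t}|Ftmeas M T D C j.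
              (leftlim (survf M (obsT T C)) s / survf M T s) * (1 / leftlim (survf M (obsT T C)) s))
          - (\<Sum>j\<in>{1..d}. LINT s:{0<..<t}|Fmeas M T D j.
              (leftlim (survf M (obsT T C)) s / survf M T s) * (1 / leftlim (survf M T) s))))
   \<and> (condprob M (\<lambda>\<omega>. T \<omega> \<le> t) (\<lambda>\<omega>. C \<omega> \<ge> t) =
       (\<Sum>j\<in>{1..d}. LINT s:{0<..t}|Ftmeas M T D C j. 1 / leftlim (survf M C) s)
       + ((LINT s:{0<..<t}|Ftmeas M T D C 0.
              (Scheck M T D C d s / survf M C s) * (1 / (1 - dHtil M T D C d s))
                * (1 / leftlim (survf M (obsT T C)) s))
          - (LINT s:{0<..<t}|Gmeas M C.
              (Scheck M T D C d s / survf M C s) * (1 / leftlim (survf M C) s))))"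
proof -
  interpret setting M T C D d t using assms by (simp add: setting_def)
  show ?thesis by (intro conjI part1 part2)
qed

end
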